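(* Let $k$ be an algebraically closed field of characteristic $0$, $R=k[x,y]$, and let $L=(x^d,x^{d-1}y^{a_1},\dots,y^{a_d})$ with $0=a_0<a_1<\dots<a_d$ be a lex-segment ideal whose differences $b_i=a_i-a_{i-1}$ satisfy $b_i\le b_{i+1}$ for $i=1,\dots,d-1$. Let $\psi:R[T_0,\dots,T_d]\to\mathcal R(L)=R[Lt]$ be the $R$-algebra map with $\psi(T_i)=x^{d-i}y^{a_i}t$, and $H=\ker\psi$. Then the elements $$xT_i-y^{b_i}T_{i-1}\ (i=1,\dots,d),\qquad T_iT_{j-1}-y^{b_i-b_j}T_{i-1}T_j\ (d\ge i>j\ge1)$$ form a Gröbner basis of $H$ with respect to any term order on $k[x,y,T_0,\dots,T_d]$ for which the initial term of each listed element is the term written on the left. Moreover, $\mathcal R(L)$ is normal.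
   Context: $\mathcal R(L)=\bigoplus_{n\ge0}L^n$ is the Rees algebra, identified with $R[Lt]\subseteq R[t]$. *)

theory Defs
  imports "HOL-Computational_Algebra.Polynomial" "HOL-Library.Poly_Mapping"
begin

type_synonym monom = "nat \<Rightarrow>\<^sub>0 nat"
type_synonym 'k mpoly = "monom \<Rightarrow>\<^sub>0 'k"

definition Var :: "nat \<Rightarrow> 'k::comm_ring_1 mpoly" where
  "Var i = Poly_Mapping.single (Poly_Mapping.single i 1) 1"

definition polys_in :: "nat \<Rightarrow> 'k::comm_ring_1 mpoly set" where
  "polys_in n = {f. \<forall>m \<in> Poly_Mapping.keys f. Poly_Mapping.keys m \<subseteq> {..<n}}"

definition monoms_in :: "nat \<Rightarrow> monom set" where
  "monoms_in n = {m. Poly_Mapping.keys m \<subseteq> {..<n}}"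

definition subst :: "(nat \<Rightarrow> 'k::comm_ring_1 mpoly) \<Rightarrow> 'k mpoly \<Rightarrow> 'k mpoly" where
  "subst s f = (\<Sum>m \<in> Poly_Mapping.keys f. Poly_Mapping.single 0 (Poly_Mapping.lookup f m) *
                   (\<Prod>i \<in> Poly_Mapping.keys m. s i ^ Poly_Mapping.lookup m i))"

definition term_order :: "nat \<Rightarrow> (monom \<Rightarrow> monom \<Rightarrow> bool) \<Rightarrow> bool" where
  "term_order n ord \<longleftrightarrow>
     (\<forall>m \<in> monoms_in n. ord m m) \<and>
     (\<forall>m \<in> monoms_in n. \<forall>m' \<in> monoms_in n. ord m m' \<and> ord m' m \<longrightarrow> m = m') \<and>
     (\<forall>m \<in> monoms_in n. \<forall>m' \<in> monoms_in n. \<forall>m'' \<in> monoms_in n.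
         ord m m' \<and> ord m' m'' \<longrightarrow> ord m m'') \<and>
     (\<forall>m \<in> monoms_in n. \<forall>m' \<in> monoms_in n. ord m m' \<or> ord m' m) \<and>
     (\<forall>m \<in> monoms_in n. ord 0 m) \<and>
     (\<forall>m \<in> monoms_in n. \<forall>m' \<in> monoms_in n. \<forall>u \<in> monoms_in n.
         ord m m' \<longrightarrow> ord (m + u) (m' + u))"

definition lead_monom :: "(monom \<Rightarrow> monom \<Rightarrow> bool) \<Rightarrow> 'k::zero mpoly \<Rightarrow> monom" where
  "lead_monom ord f = (THE m. m \<in> Poly_Mapping.keys f \<and> (\<forall>m' \<in> Poly_Mapping.keys f. ord m' m))"

definition ideal_gen :: "nat \<Rightarrow> 'k::comm_ring_1 mpoly set \<Rightarrow> 'k mpoly set" where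
  "ideal_gen n A = {f. \<exists>S c. finite S \<and> S \<subseteq> A \<and> (\<forall>s \<in> S. c s \<in> polys_in n) \<and>
                          f = (\<Sum>s \<in> S. c s * s)}"

definition mon :: "monom \<Rightarrow> 'k::comm_ring_1 mpoly" where
  "mon m = Poly_Mapping.single m 1"

definition groebner_basis ::
  "nat \<Rightarrow> (monom \<Rightarrow> monom \<Rightarrow> bool) \<Rightarrow> 'k::comm_ring_1 mpoly set \<Rightarrow> 'k mpoly set \<Rightarrow> bool" where
  "groebner_basis n ord G I \<longleftrightarrow>
     G \<subseteq> I \<and>
     ideal_gen n {(mon (lead_monom ord f) :: 'k mpoly) | f. f \<in> I \<and> f \<noteq> 0} =
     ideal_gen n {(mon (lead_monom ord g) :: 'k mpoly) | g. g \<in> G \<and> g \<noteq> 0}"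

text \<open>A subring A of a domain is normal (integrally closed in its field of
  fractions): every fraction p/q (p, q in A, q nonzero) that is integral over A
  lies in A. The integral equation (p/q)^n + c_(n-1) (p/q)^(n-1) + ... + c_0 = 0
  is written with denominators cleared.\<close>
definition normal_subring :: "'a::idom set \<Rightarrow> bool" where
  "normal_subring A \<longleftrightarrow>
     (\<forall>p \<in> A. \<forall>q \<in> A. q \<noteq> 0 \<longrightarrow>
        (\<exists>n>0. \<exists>c. (\<forall>i<n. c i \<in> A) \<and>
             p ^ n + (\<Sum>i<n. c i * p ^ i * q ^ (n - i)) = 0) \<longrightarrow>
        (\<exists>r \<in> A. p = r * q))"

text \<open>Variable conventions.
  Source ring S = k[x, y, T_0, ..., T_d]: x = X_0, y = X_1, T_i = X_(i+2).
  Target ring k[x, y, t]: x = X_0, y = X_1, t = X_2.\<close>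

definition Tv :: "nat \<Rightarrow> 'k::comm_ring_1 mpoly" where
  "Tv i = Var (i + 2)"

definition rees_map :: "nat \<Rightarrow> (nat \<Rightarrow> nat) \<Rightarrow> 'k::comm_ring_1 mpoly \<Rightarrow> 'k mpoly" where
  "rees_map d a = subst (\<lambda>j. if j = 0 then Var 0 else if j = 1 then Var 1
                            else Var 0 ^ (d - (j - 2)) * Var 1 ^ a (j - 2) * Var 2)"

definition rees_kernel :: "nat \<Rightarrow> (nat \<Rightarrow> nat) \<Rightarrow> 'k::comm_ring_1 mpoly set" where
  "rees_kernel d a = {f \<in> polys_in (d + 3). rees_map d a f = 0}"

definition rees_algebra :: "nat \<Rightarrow> (nat \<Rightarrow> nat) \<Rightarrow> 'k::comm_ring_1 mpoly set" where
  "rees_algebra d a = rees_map d a ` polys_in (d + 3)"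

definition diff_seq :: "(nat \<Rightarrow> nat) \<Rightarrow> nat \<Rightarrow> nat" where
  "diff_seq a i = a i - a (i - 1)"

definition gb_linear :: "(nat \<Rightarrow> nat) \<Rightarrow> nat \<Rightarrow> 'k::comm_ring_1 mpoly" where
  "gb_linear a i = Var 0 * Tv i - Var 1 ^ diff_seq a i * Tv (i - 1)"

definition gb_quad :: "(nat \<Rightarrow> nat) \<Rightarrow> nat \<Rightarrow> nat \<Rightarrow> 'k::comm_ring_1 mpoly" where
  "gb_quad a i j = Tv i * Tv (j - 1) - Var 1 ^ (diff_seq a i - diff_seq a j) * Tv (i - 1) * Tv j"

definition gb_set :: "nat \<Rightarrow> (nat \<Rightarrow> nat) \<Rightarrow> 'k::comm_ring_1 mpoly set" where
  "gb_set d a = {gb_linear a i | i. 1 \<le> i \<and> i \<le> d} \<union>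
               {gb_quad a i j | i j. j < i \<and> i \<le> d \<and> 1 \<le> j}"

end

theory Submission
  imports Defs
begin

abbreviation lk :: "('a \<Rightarrow>\<^sub>0 'b::zero) \<Rightarrow> 'a \<Rightarrow> 'b" where "lk \<equiv> Poly_Mapping.lookup"
abbreviation ks :: "('a \<Rightarrow>\<^sub>0 'b::zero) \<Rightarrow> 'a set" where "ks \<equiv> Poly_Mapping.keys"
abbreviation sg :: "'a \<Rightarrow> 'b \<Rightarrow> ('a \<Rightarrow>\<^sub>0 'b::zero)" where "sg \<equiv> Poly_Mapping.single"

lemma mon_mult: "(mon a :: 'k::comm_ring_1 mpoly) * mon b = mon (a + b)"
  unfolding mon_def by (simp add: mult_single)

lemma Var_mon: "Var i = mon (sg i 1)"
  unfolding Var_def mon_def by simp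

lemma Var_pow: "(Var i :: 'k::comm_ring_1 mpoly) ^ k = mon (sg i k)"
proof (induction k)
  case 0
  then show ?case by (simp add: mon_def)
next
  case (Suc k)
  then show ?case by (simp add: Var_mon mon_mult single_add[symmetric])
qed

lemma Tv_mon: "Tv i = mon (sg (i+2) 1)"
  unfolding Tv_def by (simp add: Var_mon)

definition m3 :: "nat \<Rightarrow> nat \<Rightarrow> nat \<Rightarrow> monom" where
  "m3 x y z = sg 0 x + sg 1 y + sg 2 z"

lemma m3_add: "m3 x y z + m3 x' y' z' = m3 (x+x') (y+y') (z+z')"
  unfolding m3_def by (simp add: single_add ac_simps)

lemma m3_zero: "m3 0 0 0 = 0"
  unfolding m3_def by simp

lemma lk_m3: "lk (m3 x y z) j = (if j = 0 then x else if j = 1 then y else if j = 2 then z else 0)"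
  unfolding m3_def by (simp add: lookup_add lookup_single when_def)

lemma mon3_pow: "(mon (m3 x y z) :: 'k::comm_ring_1 mpoly) ^ k = mon (m3 (k*x) (k*y) (k*z))"
proof (induction k)
  case 0
  then show ?case by (simp add: mon_def m3_zero)
next
  case (Suc k)
  then show ?case by (simp add: mon_mult m3_add)
qed

lemma mon3_prod:
  assumes "finite J"
  shows "(\<Prod>j\<in>J. (mon (m3 (f j) (g j) (h j)) :: 'k::comm_ring_1 mpoly))
    = mon (m3 (\<Sum>j\<in>J. f j) (\<Sum>j\<in>J. g j) (\<Sum>j\<in>J. h j))"
  using assms
proof (induction J rule: finite_induct)
  case empty
  then show ?case by (simp add: mon_def m3_zero)
next
  case (insert x F)
  then show ?case by (simp add: mon_mult m3_add)
qed

definition ex :: "nat \<Rightarrow> nat \<Rightarrow> nat" where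
  "ex d j = (if j = 0 then 1 else if j = 1 then 0 else d - (j - 2))"
definition ey :: "(nat \<Rightarrow> nat) \<Rightarrow> nat \<Rightarrow> nat" where
  "ey a j = (if j = 0 then 0 else if j = 1 then 1 else a (j - 2))"
definition et :: "nat \<Rightarrow> nat" where
  "et j = (if j \<le> 1 then 0 else 1)"
definition lin :: "nat \<Rightarrow> (nat \<Rightarrow> nat) \<Rightarrow> monom \<Rightarrow> nat" where
  "lin n w m = (\<Sum>j<n. lk m j * w j)"
definition Phi :: "nat \<Rightarrow> (nat \<Rightarrow> nat) \<Rightarrow> monom \<Rightarrow> monom" where
  "Phi d a m = m3 (lin (d+3) (ex d) m) (lin (d+3) (ey a) m) (lin (d+3) et m)"

lemma rees_var:
  "(if j = 0 then Var 0 else if j = 1 then Var 1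
     else Var 0 ^ (d - (j - 2)) * Var 1 ^ a (j - 2) * Var 2)
   = (mon (m3 (ex d j) (ey a j) (et j)) :: 'k::comm_ring_1 mpoly)"
proof -
  have 0: "Var 0 = (mon (m3 1 0 0) :: 'k mpoly)" and 1: "Var (Suc 0) = (mon (m3 0 1 0) :: 'k mpoly)"
    and 2: "Var 2 = (mon (m3 0 0 1) :: 'k mpoly)"
    by (simp_all add: Var_mon m3_def)
  show ?thesis by (auto simp: ex_def ey_def et_def 0 1 2 mon3_pow mon_mult m3_add)
qed

lemma lin_keys:
  assumes "ks m \<subseteq> {..<n}"
  shows "(\<Sum>j\<in>ks m. lk m j * w j) = lin n w m"
  unfolding lin_def
  by (rule sum.mono_neutral_left) (use assms in \<open>auto simp: in_keys_iff\<close>)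

lemma rees_monom:
  assumes "ks m \<subseteq> {..<d+3}"
  shows "(\<Prod>i\<in>ks m. (if i = 0 then Var 0 else if i = 1 then Var 1
     else Var 0 ^ (d - (i - 2)) * Var 1 ^ a (i - 2) * Var 2) ^ lk m i)
   = (mon (Phi d a m) :: 'k::comm_ring_1 mpoly)"
proof -
  have "(\<Prod>i\<in>ks m. (if i = 0 then Var 0 else if i = 1 then Var 1
     else Var 0 ^ (d - (i - 2)) * Var 1 ^ a (i - 2) * Var 2) ^ lk m i)
   = (\<Prod>i\<in>ks m. (mon (m3 (lk m i * ex d i) (lk m i * ey a i) (lk m i * et i)) :: 'k mpoly))"
    by (simp only: rees_var mon3_pow)
  also have "\<dots> = mon (Phi d a m)"
    by (simp add: mon3_prod Phi_def lin_keys[OF assms])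
  finally show ?thesis .
qed

lemma rees_map_formula:
  assumes "f \<in> polys_in (d+3)"
  shows "rees_map d a f = (\<Sum>m\<in>ks f. sg (Phi d a m) (lk f m) :: 'k::comm_ring_1 mpoly)"
proof -
  have "rees_map d a f = (\<Sum>m\<in>ks f. sg 0 (lk f m) * (mon (Phi d a m) :: 'k mpoly))"
    unfolding rees_map_def subst_def
    by (rule sum.cong) (use assms in \<open>auto simp: polys_in_def rees_monom\<close>)
  also have "\<dots> = (\<Sum>m\<in>ks f. sg (Phi d a m) (lk f m))"
    by (simp add: mon_def mult_single)
  finally show ?thesis .
qed

lemma lin_add: "lin n w (m + m') = lin n w m + lin n w m'"
  unfolding lin_def by (simp add: lookup_add sum.distrib algebra_simps)

lemma lin_single: "lin n w (sg p c) = (if p < n then c * w p else 0)"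
proof -
  have *: "(\<lambda>j. lk (sg p c) j * w j) = (\<lambda>j. if p = j then c * w p else 0)"
    by (auto simp: lookup_single when_def)
  show ?thesis unfolding lin_def by (simp only: *) simp
qed

lemma lin_zero[simp]: "lin n w 0 = 0"
  unfolding lin_def by simp

lemma Phi_add: "Phi d a (m + m') = Phi d a m + Phi d a m'"
  unfolding Phi_def by (simp add: lin_add m3_add)

lemma m3_eq_iff: "m3 x y z = m3 x' y' z' \<longleftrightarrow> x = x' \<and> y = y' \<and> z = z'"
proof
  assume h: "m3 x y z = m3 x' y' z'"
  have "lk (m3 x y z) 0 = lk (m3 x' y' z') 0" "lk (m3 x y z) 1 = lk (m3 x' y' z') 1"
       "lk (m3 x y z) 2 = lk (m3 x' y' z') 2" using h by simp_all
  then show "x = x' \<and> y = y' \<and> z = z'" by (simp add: lk_m3)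
qed simp

lemma monoms_in_add: "m \<in> monoms_in n \<Longrightarrow> m' \<in> monoms_in n \<Longrightarrow> m + m' \<in> monoms_in n"
  unfolding monoms_in_def using keys_add[of m m'] by auto

lemma monoms_in_single: "p < n \<Longrightarrow> sg p c \<in> monoms_in n"
  unfolding monoms_in_def by simp

lemma monoms_in_zero[simp]: "0 \<in> monoms_in n"
  unfolding monoms_in_def by simp

lemma monoms_in_m3: "3 \<le> n \<Longrightarrow> m3 x y z \<in> monoms_in n"
  unfolding m3_def by (intro monoms_in_add monoms_in_single) auto

lemma polys_in_iff: "f \<in> polys_in n \<longleftrightarrow> ks f \<subseteq> monoms_in n"
  unfolding polys_in_def monoms_in_def by auto

lemma polys_in_add: "f \<in> polys_in n \<Longrightarrow> g \<in> polys_in n \<Longrightarrow> f + g \<in> polys_in n"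
  unfolding polys_in_iff using keys_add[of f g] by auto

lemma polys_in_uminus: "f \<in> polys_in n \<Longrightarrow> - (f::'k::comm_ring_1 mpoly) \<in> polys_in n"
  unfolding polys_in_iff by simp

lemma polys_in_diff: "f \<in> polys_in n \<Longrightarrow> g \<in> polys_in n \<Longrightarrow> (f::'k::comm_ring_1 mpoly) - g \<in> polys_in n"
  unfolding polys_in_iff using keys_diff[of f g] by auto

lemma polys_in_mult:
  assumes "f \<in> polys_in n" "g \<in> polys_in n"
  shows "(f::'k::comm_ring_1 mpoly) * g \<in> polys_in n"
proof -
  have "ks (f * g) \<subseteq> monoms_in n"
  proof
    fix x assume "x \<in> ks (f * g)"
    then obtain u v where "x = u + v" "u \<in> ks f" "v \<in> ks g" using keys_mult[of f g] by blast
    then show "x \<in> monoms_in n" using assms monoms_in_add unfolding polys_in_iff by blast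
  qed
  then show ?thesis by (simp add: polys_in_iff)
qed

lemma polys_in_mon: "m \<in> monoms_in n \<Longrightarrow> (mon m :: 'k::comm_ring_1 mpoly) \<in> polys_in n"
  unfolding polys_in_iff mon_def by simp

lemma polys_in_zero[simp]: "0 \<in> polys_in n"
  unfolding polys_in_iff by simp

lemma keys_mon[simp]: "ks (mon m :: 'k::comm_ring_1 mpoly) = {m}"
  unfolding mon_def by simp

lemma lk_mon: "lk (mon m :: 'k::comm_ring_1 mpoly) m' = (if m = m' then 1 else 0)"
  unfolding mon_def by (simp add: lookup_single when_def)

section \<open>Term orders\<close>

lemma to_refl: "term_order n ord \<Longrightarrow> m \<in> monoms_in n \<Longrightarrow> ord m m"
  unfolding term_order_def by (elim conjE) (rule bspec)
lemma to_antisym: "term_order n ord \<Longrightarrow> m \<in> monoms_in n \<Longrightarrow> m' \<in> monoms_in n \<Longrightarrow> ord m m' \<Longrightarrow> ord m' m \<Longrightarrow> m = m'"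
  unfolding term_order_def by (elim conjE) (meson)
lemma to_trans: "term_order n ord \<Longrightarrow> m \<in> monoms_in n \<Longrightarrow> m' \<in> monoms_in n \<Longrightarrow> m'' \<in> monoms_in n \<Longrightarrow> ord m m' \<Longrightarrow> ord m' m'' \<Longrightarrow> ord m m''"
  unfolding term_order_def by (elim conjE) (meson)
lemma to_total: "term_order n ord \<Longrightarrow> m \<in> monoms_in n \<Longrightarrow> m' \<in> monoms_in n \<Longrightarrow> ord m m' \<or> ord m' m"
  unfolding term_order_def by (elim conjE) (meson)
lemma to_add: "term_order n ord \<Longrightarrow> m \<in> monoms_in n \<Longrightarrow> m' \<in> monoms_in n \<Longrightarrow> u \<in> monoms_in n \<Longrightarrow> ord m m' \<Longrightarrow> ord (m + u) (m' + u)"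
  unfolding term_order_def by (elim conjE) (meson)

lemma ord_max_exists:
  assumes to: "term_order n ord" and "finite K" "K \<noteq> {}" "K \<subseteq> monoms_in n"
  shows "\<exists>M\<in>K. \<forall>m\<in>K. ord m M"
  using assms(2,3,4)
proof (induction K rule: finite_ne_induct)
  case (singleton x)
  then show ?case using to_refl[OF to] by auto
next
  case (insert x F)
  then obtain M where M: "M \<in> F" "\<forall>m\<in>F. ord m M" by auto
  have xin: "x \<in> monoms_in n" and Fin: "F \<subseteq> monoms_in n" using insert by auto
  show ?case
  proof (cases "ord x M")
    case True
    then show ?thesis using M by auto
  next
    case False
    then have "ord M x" using to_total[OF to xin, of M] M Fin by auto
    have "\<forall>m\<in>insert x F. ord m x"
    proof
      fix m assume "m \<in> insert x F"
      then show "ord m x"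
      proof
        assume "m = x" then show ?thesis using to_refl[OF to xin] by simp
      next
        assume "m \<in> F"
        then show ?thesis using to_trans[OF to _ _ xin, of m M] M Fin \<open>ord M x\<close> by blast
      qed
    qed
    then show ?thesis by auto
  qed
qed

lemma lead_prop:
  assumes to: "term_order n ord" and f: "f \<in> polys_in n" and nz: "f \<noteq> 0"
  shows "lead_monom ord f \<in> ks f \<and> (\<forall>m\<in>ks f. ord m (lead_monom ord f))"
proof -
  have K: "ks f \<subseteq> monoms_in n" using f by (simp add: polys_in_iff)
  obtain M where M: "M \<in> ks f" "\<forall>m\<in>ks f. ord m M"
    using ord_max_exists[OF to finite_keys _ K] nz by auto
  have "lead_monom ord f = M"
    unfolding lead_monom_def
  proof (rule the_equality)
    show "M \<in> ks f \<and> (\<forall>m'\<in>ks f. ord m' M)" using M by auto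
    fix m assume "m \<in> ks f \<and> (\<forall>m'\<in>ks f. ord m' m)"
    then show "m = M" using M K to_antisym[OF to] by blast
  qed
  then show ?thesis using M by simp
qed

lemma lead_mon:
  assumes to: "term_order n ord" and "M \<in> monoms_in n"
  shows "lead_monom ord (mon M :: 'k::comm_ring_1 mpoly) = M"
proof -
  have "(mon M :: 'k mpoly) \<noteq> 0"
  proof
    assume "mon M = (0 :: 'k mpoly)"
    then have "lk (mon M :: 'k mpoly) M = 0" by simp
    then show False by (simp add: lk_mon)
  qed
  then have "lead_monom ord (mon M :: 'k mpoly) \<in> ks (mon M :: 'k mpoly)"
    using lead_prop[OF to polys_in_mon[OF assms(2)]] by blast
  then show ?thesis by simp
qed

lemma keys_binom:
  assumes "L \<noteq> R"
  shows "ks (mon L - mon R :: 'k::comm_ring_1 mpoly) = {L, R}"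
  using assms by (auto simp: in_keys_iff lookup_minus lk_mon split: if_splits)

lemma binom_nz:
  assumes "L \<noteq> R"
  shows "(mon L - mon R :: 'k::comm_ring_1 mpoly) \<noteq> 0"
proof -
  have "ks (mon L - mon R :: 'k mpoly) = {L, R}" by (rule keys_binom[OF assms])
  then show ?thesis by auto
qed

lemma binom_polys:
  assumes "L \<in> monoms_in n" "R \<in> monoms_in n"
  shows "(mon L - mon R :: 'k::comm_ring_1 mpoly) \<in> polys_in n"
  using assms by (simp add: polys_in_diff polys_in_mon)

lemma lead_binom:
  assumes to: "term_order n ord" and LR: "L \<noteq> R" "L \<in> monoms_in n" "R \<in> monoms_in n"
    and lead: "lead_monom ord (mon L - mon R :: 'k::comm_ring_1 mpoly) = L"
  shows "ord R L"
proof -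
  have "ks (mon L - mon R :: 'k mpoly) = {L, R}" by (rule keys_binom[OF LR(1)])
  moreover have "(mon L - mon R :: 'k mpoly) \<noteq> 0" by (rule binom_nz[OF LR(1)])
  moreover have "(mon L - mon R :: 'k mpoly) \<in> polys_in n" by (rule binom_polys[OF LR(2,3)])
  ultimately show ?thesis using lead_prop[OF to, of "mon L - mon R :: 'k mpoly"] lead by auto
qed

abbreviation bb :: "(nat \<Rightarrow> nat) \<Rightarrow> nat \<Rightarrow> nat" where "bb \<equiv> diff_seq"

definition LL :: "nat \<Rightarrow> monom" where "LL i = sg 0 1 + sg (i+2) 1"
definition LR :: "(nat \<Rightarrow> nat) \<Rightarrow> nat \<Rightarrow> monom" where "LR a i = sg 1 (bb a i) + sg (i+1) 1"
definition QL :: "nat \<Rightarrow> nat \<Rightarrow> monom" where "QL i j = sg (i+2) 1 + sg (j+1) 1"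
definition QR :: "(nat \<Rightarrow> nat) \<Rightarrow> nat \<Rightarrow> nat \<Rightarrow> monom" where
  "QR a i j = sg 1 (bb a i - bb a j) + sg (i+1) 1 + sg (j+2) 1"

definition wmu :: "nat \<Rightarrow> nat" where "wmu j = (if j = 0 then 1 else if j = 1 then 0 else (j-2)*(j-2))"

definition std :: "nat \<Rightarrow> monom \<Rightarrow> bool" where
  "std d m \<longleftrightarrow> \<not>(\<exists>i. 1 \<le> i \<and> i \<le> d \<and> 0 < lk m 0 \<and> 0 < lk m (i+2)) \<and>
      \<not>(\<exists>p q. 2 \<le> q \<and> q + 2 \<le> p \<and> p \<le> d+2 \<and> 0 < lk m p \<and> 0 < lk m q)"

lemma gb_linear_eq: "1 \<le> i \<Longrightarrow> gb_linear a i = (mon (LL i) - mon (LR a i) :: 'k::comm_ring_1 mpoly)"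
  unfolding gb_linear_def LL_def LR_def by (simp only: Var_pow) (simp only: Tv_mon Var_mon mon_mult, simp)

lemma lin_lhs_eq: "(Var 0 * Tv i :: 'k::comm_ring_1 mpoly) = mon (LL i)"
  unfolding LL_def by (simp add: Tv_mon Var_mon mon_mult)

lemma gb_quad_eq: "1 \<le> j \<Longrightarrow> j < i \<Longrightarrow> gb_quad a i j = (mon (QL i j) - mon (QR a i j) :: 'k::comm_ring_1 mpoly)"
  unfolding gb_quad_def QL_def QR_def by (simp only: Var_pow) (simp only: Tv_mon Var_mon mon_mult, simp add: add.assoc)

lemma quad_lhs_eq: "1 \<le> j \<Longrightarrow> (Tv i * Tv (j - 1) :: 'k::comm_ring_1 mpoly) = mon (QL i j)"
  unfolding QL_def by (simp add: Tv_mon mon_mult)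

lemma LL_ne: "LL i \<noteq> LR a i"
proof
  assume "LL i = LR a i"
  then have "lk (LL i) 0 = lk (LR a i) 0" by simp
  then show False unfolding LL_def LR_def by (simp add: lookup_add lookup_single when_def)
qed

lemma QL_ne: "j < i \<Longrightarrow> QL i j \<noteq> QR a i j"
proof
  assume "j < i" "QL i j = QR a i j"
  then have "lk (QL i j) (i+2) = lk (QR a i j) (i+2)" by simp
  then show False using \<open>j < i\<close> unfolding QL_def QR_def by (simp add: lookup_add lookup_single when_def)
qed

lemma LL_in: "i \<le> d \<Longrightarrow> LL i \<in> monoms_in (d+3)"
  unfolding LL_def by (intro monoms_in_add monoms_in_single) auto
lemma LR_in: "i \<le> d \<Longrightarrow> LR a i \<in> monoms_in (d+3)"
  unfolding LR_def by (intro monoms_in_add monoms_in_single) auto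
lemma QL_in: "i \<le> d \<Longrightarrow> j < i \<Longrightarrow> QL i j \<in> monoms_in (d+3)"
  unfolding QL_def by (intro monoms_in_add monoms_in_single) auto
lemma QR_in: "i \<le> d \<Longrightarrow> j < i \<Longrightarrow> QR a i j \<in> monoms_in (d+3)"
  unfolding QR_def by (intro monoms_in_add monoms_in_single) auto

lemma mu_LL: "1 \<le> i \<Longrightarrow> i \<le> d \<Longrightarrow> lin (d+3) wmu (LR a i) < lin (d+3) wmu (LL i)"
proof -
  assume "1 \<le> i" "i \<le> d"
  moreover have "(i - 1) * (i - 1) \<le> i * i" by (simp add: mult_le_mono)
  ultimately show ?thesis unfolding LL_def LR_def by (simp add: lin_add lin_single wmu_def)
qed

lemma ex_simps[simp]: "ex d 0 = 1" "ex d (Suc 0) = 0" "ex d (Suc (Suc j)) = d - j"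
  by (simp_all add: ex_def)
lemma ey_simps[simp]: "ey a 0 = 0" "ey a (Suc 0) = 1" "ey a (Suc (Suc j)) = a j"
  by (simp_all add: ey_def)
lemma et_simps[simp]: "et 0 = 0" "et (Suc 0) = 0" "et (Suc (Suc j)) = 1"
  by (simp_all add: et_def)
lemma wmu_simps[simp]: "wmu 0 = 1" "wmu (Suc 0) = 0" "wmu (Suc (Suc j)) = j * j"
  by (simp_all add: wmu_def)

lemma lin_LL: "i \<le> d \<Longrightarrow> lin (d+3) w (LL i) = w 0 + w (Suc (Suc i))"
  unfolding LL_def by (simp add: lin_add lin_single)
lemma lin_LR: "1 \<le> i \<Longrightarrow> i \<le> d \<Longrightarrow> lin (d+3) w (LR a i) = bb a i * w 1 + w (Suc i)"
  unfolding LR_def by (simp add: lin_add lin_single)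
lemma lin_QL: "j < i \<Longrightarrow> i \<le> d \<Longrightarrow> lin (d+3) w (QL i j) = w (Suc (Suc i)) + w (Suc j)"
  unfolding QL_def by (simp add: lin_add lin_single)
lemma lin_QR: "j < i \<Longrightarrow> i \<le> d \<Longrightarrow> lin (d+3) w (QR a i j) = (bb a i - bb a j) * w 1 + w (Suc i) + w (Suc (Suc j))"
  unfolding QR_def by (simp add: lin_add lin_single)

lemma mu_QL: "1 \<le> j \<Longrightarrow> j < i \<Longrightarrow> i \<le> d \<Longrightarrow> lin (d+3) wmu (QR a i j) < lin (d+3) wmu (QL i j)"
proof -
  assume h: "1 \<le> j" "j < i" "i \<le> d"
  obtain i' j' where ij: "i = Suc i'" "j = Suc j'" using h by (metis Suc_pred' less_le_trans zero_less_one less_le)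
  have "i' * i' + j * j < i * i + j' * j'" using h ij by (simp add: algebra_simps)
  then show ?thesis using h ij by (simp add: lin_QL lin_QR)
qed

lemma lin_m3: "lin (d+3) w (m3 x y z) = x * w 0 + y * w 1 + z * w 2"
  unfolding m3_def by (simp add: lin_add lin_single)

context
  fixes d :: nat and a :: "nat \<Rightarrow> nat"
  assumes a0: "a 0 = 0"
    and a_incr: "\<And>i. 1 \<le> i \<Longrightarrow> i \<le> d \<Longrightarrow> a (i - 1) < a i"
    and b_mono: "\<And>i. 1 \<le> i \<Longrightarrow> i + 1 \<le> d \<Longrightarrow> diff_seq a i \<le> diff_seq a (i + 1)"
begin

lemma a_step: "1 \<le> i \<Longrightarrow> i \<le> d \<Longrightarrow> a i = a (i - 1) + bb a i"
  using a_incr[of i] unfolding diff_seq_def by simp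

lemma b_mono_gen: "1 \<le> i \<Longrightarrow> i \<le> j \<Longrightarrow> j \<le> d \<Longrightarrow> bb a i \<le> bb a j"
proof (induction j)
  case 0
  then show ?case by simp
next
  case (Suc j)
  show ?case
  proof (cases "i = Suc j")
    case True
    then show ?thesis by simp
  next
    case False
    then have "i \<le> j" using Suc by simp
    then have "bb a i \<le> bb a j" using Suc by simp
    also have "bb a j \<le> bb a (Suc j)" using b_mono[of j] Suc \<open>i \<le> j\<close> by simp
    finally show ?thesis .
  qed
qed

lemma conv_up: "1 \<le> i \<Longrightarrow> i + t \<le> d \<Longrightarrow> a i + t * bb a i \<le> a (i + t)"
proof (induction t)
  case 0
  then show ?case by simp
next
  case (Suc t)
  have "a (i + Suc t) = a (i + t) + bb a (i + Suc t)" using a_step[of "i + Suc t"] Suc by simp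
  moreover have "bb a i \<le> bb a (i + Suc t)" using b_mono_gen[of i "i + Suc t"] Suc by simp
  ultimately show ?case using Suc by simp
qed

lemma conv_down: "1 \<le> i \<Longrightarrow> i \<le> d \<Longrightarrow> t \<le> i \<Longrightarrow> a i \<le> a (i - t) + t * bb a i"
proof (induction t)
  case 0
  then show ?case by simp
next
  case (Suc t)
  have tl: "t < i" using Suc by simp
  have "a (i - t) = a (i - t - 1) + bb a (i - t)" using a_step[of "i - t"] Suc tl by simp
  moreover have "i - t - 1 = i - Suc t" by simp
  moreover have "bb a (i - t) \<le> bb a i" using b_mono_gen[of "i - t" i] Suc tl by simp
  moreover have "a i \<le> a (i - t) + t * bb a i" using Suc tl by simp
  ultimately show ?case by simp
qed

lemma convex: "1 \<le> i \<Longrightarrow> i \<le> d \<Longrightarrow> l \<le> d \<Longrightarrow>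
   int (bb a i) * (int l - int i) \<le> int (a l) - int (a i)"
proof (cases "i \<le> l")
  case True
  assume h: "1 \<le> i" "i \<le> d" "l \<le> d"
  have "a i + (l - i) * bb a i \<le> a l" using conv_up[of i "l - i"] h True by simp
  then have "int (a i) + int (l - i) * int (bb a i) \<le> int (a l)"
    by (simp only: of_nat_add[symmetric] of_nat_mult[symmetric] of_nat_le_iff)
  moreover have "int (l - i) = int l - int i" using True by simp
  ultimately show ?thesis by (simp add: algebra_simps)
next
  case False
  assume h: "1 \<le> i" "i \<le> d" "l \<le> d"
  have "a i \<le> a l + (i - l) * bb a i" using conv_down[of i "i - l"] h False by simp
  then have "int (a i) \<le> int (a l) + int (i - l) * int (bb a i)"
    by (simp only: of_nat_add[symmetric] of_nat_mult[symmetric] of_nat_le_iff)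
  moreover have "int (i - l) = int i - int l" using False by simp
  ultimately show ?thesis by (simp add: algebra_simps)
qed

lemma b_le: "1 \<le> j \<Longrightarrow> j < i \<Longrightarrow> i \<le> d \<Longrightarrow> bb a j \<le> bb a i"
  using b_mono_gen by simp

lemma Phi_LL: "1 \<le> i \<Longrightarrow> i \<le> d \<Longrightarrow> Phi d a (LL i) = Phi d a (LR a i)"
proof -
  assume h: "1 \<le> i" "i \<le> d"
  then obtain i' where i': "i = Suc i'" by (cases i) auto
  have "a i = a i' + bb a i" using a_step[of i] h i' by simp
  then show ?thesis using h i' unfolding Phi_def m3_eq_iff by (simp add: lin_LL lin_LR)
qed

lemma Phi_QL: "1 \<le> j \<Longrightarrow> j < i \<Longrightarrow> i \<le> d \<Longrightarrow> Phi d a (QL i j) = Phi d a (QR a i j)"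
proof -
  assume h: "1 \<le> j" "j < i" "i \<le> d"
  have ai: "a i = a (i - 1) + bb a i" using a_step[of i] h by simp
  have aj: "a j = a (j - 1) + bb a j" using a_step[of j] h by simp
  have bij: "bb a j \<le> bb a i" using b_le h by simp
  obtain i' where i': "i = Suc i'" using h by (cases i) auto
  obtain j' where j': "j = Suc j'" using h by (cases j) auto
  show ?thesis
    using h ai aj bij i' j'
    unfolding Phi_def m3_eq_iff
    by (simp add: lin_QL lin_QR)
qed

end

lemma monoms_in_out: "m \<in> monoms_in n \<Longrightarrow> n \<le> j \<Longrightarrow> lk m j = 0"
proof (rule ccontr)
  assume "m \<in> monoms_in n" "n \<le> j" "lk m j \<noteq> 0"
  then have "j \<in> ks m" "ks m \<subseteq> {..<n}" by (simp_all add: in_keys_iff monoms_in_def)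
  then show False using \<open>n \<le> j\<close> by auto
qed

lemma monoms_in_minus: "m \<in> monoms_in n \<Longrightarrow> (m - u :: monom) \<in> monoms_in n"
proof -
  assume m: "m \<in> monoms_in n"
  have "ks (m - u) \<subseteq> ks m"
  proof
    fix x assume "x \<in> ks (m - u)"
    then have "lk m x - lk u x \<noteq> 0" by (simp add: in_keys_iff lookup_minus)
    then show "x \<in> ks m" by (simp add: in_keys_iff)
  qed
  then show ?thesis using m unfolding monoms_in_def by auto
qed

lemma split2:
  fixes m :: monom
  assumes "0 < lk m p" "0 < lk m q" "p \<noteq> q"
  shows "m = (sg p 1 + sg q 1) + (m - sg p 1 - sg q 1)"
proof -
  have *: "\<And>x::nat. 0 < x \<Longrightarrow> x = 1 + (x - 1)" by simp
  show ?thesis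
    using assms by (intro poly_mapping_eqI) (auto simp: lookup_add lookup_minus lookup_single when_def intro: *)
qed

lemma nonstd_split:
  assumes m: "m \<in> monoms_in (d+3)" and ns: "\<not> std d m"
  shows "(\<exists>i u. 1 \<le> i \<and> i \<le> d \<and> u \<in> monoms_in (d+3) \<and> m = LL i + u) \<or>
         (\<exists>i j u. j < i \<and> i \<le> d \<and> 1 \<le> j \<and> u \<in> monoms_in (d+3) \<and> m = QL i j + u)"
proof -
  have "(\<exists>i. 1 \<le> i \<and> i \<le> d \<and> 0 < lk m 0 \<and> 0 < lk m (i+2)) \<or>
      (\<exists>p q. 2 \<le> q \<and> q + 2 \<le> p \<and> p \<le> d+2 \<and> 0 < lk m p \<and> 0 < lk m q)"
      using ns unfolding std_def by (simp only: de_Morgan_conj not_not)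
  then show ?thesis
  proof
    assume "\<exists>i. 1 \<le> i \<and> i \<le> d \<and> 0 < lk m 0 \<and> 0 < lk m (i+2)"
    then obtain i where L: "1 \<le> i" "i \<le> d" "0 < lk m 0" "0 < lk m (i+2)" by blast
    then have "m = LL i + (m - sg 0 1 - sg (i+2) 1)" unfolding LL_def by (intro split2) auto
    moreover have "m - sg 0 1 - sg (i+2) 1 \<in> monoms_in (d+3)" using m monoms_in_minus by blast
    ultimately show ?thesis using L by blast
  next
    assume "\<exists>p q. 2 \<le> q \<and> q + 2 \<le> p \<and> p \<le> d+2 \<and> 0 < lk m p \<and> 0 < lk m q"
    then obtain p q where Q: "2 \<le> q" "q + 2 \<le> p" "p \<le> d+2" "0 < lk m p" "0 < lk m q" by blast
    have pq: "p - 2 + 2 = p" "q - 1 + 1 = q" using Q by auto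
    have "m = QL (p - 2) (q - 1) + (m - sg p 1 - sg q 1)"
      unfolding QL_def pq using Q by (intro split2) auto
    moreover have "q - 1 < p - 2" "p - 2 \<le> d" "1 \<le> q - 1" using Q by auto
    moreover have "m - sg p 1 - sg q 1 \<in> monoms_in (d+3)" using m monoms_in_minus by blast
    ultimately show ?thesis by blast
  qed
qed

lemma descent:
  assumes to: "term_order (d+3) ord"
    and hL: "\<And>i. 1 \<le> i \<Longrightarrow> i \<le> d \<Longrightarrow> ord (LR a i) (LL i)"
    and hQ: "\<And>i j. j < i \<Longrightarrow> i \<le> d \<Longrightarrow> 1 \<le> j \<Longrightarrow> ord (QR a i j) (QL i j)"
    and PL: "\<And>i. 1 \<le> i \<Longrightarrow> i \<le> d \<Longrightarrow> Phi d a (LL i) = Phi d a (LR a i)"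
    and PQ: "\<And>i j. 1 \<le> j \<Longrightarrow> j < i \<Longrightarrow> i \<le> d \<Longrightarrow> Phi d a (QL i j) = Phi d a (QR a i j)"
  shows "m \<in> monoms_in (d+3) \<Longrightarrow>
     \<exists>s. std d s \<and> s \<in> monoms_in (d+3) \<and> Phi d a s = Phi d a m \<and> ord s m"
proof (induction "lin (d+3) wmu m" arbitrary: m rule: less_induct)
  case less
  show ?case
  proof (cases "std d m")
    case True
    then show ?thesis using less.prems to_refl[OF to] by blast
  next
    case False
    have "\<exists>L R u. m = L + u \<and> u \<in> monoms_in (d+3) \<and> L \<in> monoms_in (d+3) \<and> R \<in> monoms_in (d+3)
       \<and> ord R L \<and> Phi d a L = Phi d a R \<and> lin (d+3) wmu R < lin (d+3) wmu L"
      using nonstd_split[OF less.prems False]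
    proof
      assume "\<exists>i u. 1 \<le> i \<and> i \<le> d \<and> u \<in> monoms_in (d+3) \<and> m = LL i + u"
      then obtain i u where "1 \<le> i" "i \<le> d" "u \<in> monoms_in (d+3)" "m = LL i + u" by blast
      then have "m = LL i + u \<and> u \<in> monoms_in (d+3) \<and> LL i \<in> monoms_in (d+3) \<and> LR a i \<in> monoms_in (d+3)
       \<and> ord (LR a i) (LL i) \<and> Phi d a (LL i) = Phi d a (LR a i) \<and> lin (d+3) wmu (LR a i) < lin (d+3) wmu (LL i)"
        using LL_in LR_in hL PL mu_LL by simp
      then show ?thesis by (intro exI)
    next
      assume "\<exists>i j u. j < i \<and> i \<le> d \<and> 1 \<le> j \<and> u \<in> monoms_in (d+3) \<and> m = QL i j + u"
      then obtain i j u where "j < i" "i \<le> d" "1 \<le> j" "u \<in> monoms_in (d+3)" "m = QL i j + u" by blast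
      then have "m = QL i j + u \<and> u \<in> monoms_in (d+3) \<and> QL i j \<in> monoms_in (d+3) \<and> QR a i j \<in> monoms_in (d+3)
       \<and> ord (QR a i j) (QL i j) \<and> Phi d a (QL i j) = Phi d a (QR a i j) \<and> lin (d+3) wmu (QR a i j) < lin (d+3) wmu (QL i j)"
        using QL_in QR_in hQ PQ mu_QL by simp
      then show ?thesis by (intro exI)
    qed
    then obtain L R u where LRu: "m = L + u" "u \<in> monoms_in (d+3)" "L \<in> monoms_in (d+3)" "R \<in> monoms_in (d+3)"
       "ord R L" "Phi d a L = Phi d a R" "lin (d+3) wmu R < lin (d+3) wmu L" by blast
    define m' where "m' = R + u"
    have m'in: "m' \<in> monoms_in (d+3)" unfolding m'_def using LRu monoms_in_add by blast
    have "lin (d+3) wmu m' < lin (d+3) wmu m" unfolding m'_def using LRu by (simp add: lin_add)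
    from less.hyps[OF this m'in] obtain s where s: "std d s" "s \<in> monoms_in (d+3)" "Phi d a s = Phi d a m'" "ord s m'"
      by blast
    have "Phi d a m' = Phi d a m" unfolding m'_def using LRu by (simp add: Phi_add)
    moreover have "ord m' m" unfolding m'_def using LRu to_add[OF to] by simp
    ultimately show ?thesis using s to_trans[OF to s(2) m'in less.prems] by auto
  qed
qed

definition can :: "nat \<Rightarrow> (nat \<Rightarrow> nat) \<Rightarrow> nat \<Rightarrow> nat \<Rightarrow> nat \<Rightarrow> monom" where
  "can d a X Y D = (if D = 0 then m3 X Y 0 else if D * d \<le> X then m3 (X - D*d) Y D
     else sg 1 (Y - ((D - (D*d - X) mod D) * a ((D*d - X) div D) + ((D*d - X) mod D) * a ((D*d - X) div D + 1)))
        + sg ((D*d - X) div D + 2) (D - (D*d - X) mod D) + sg ((D*d - X) div D + 3) ((D*d - X) mod D))"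

lemma can_third:
  assumes "0 < P" "D = P + Q" "D*d = X + (D*k + Q)" "0 < D*k + Q" "Y = s1 + (P * a k + Q * a (k+1))"
  shows "can d a X Y D = sg 1 s1 + sg (k+2) P + sg (k+3) Q"
proof -
  have D: "D \<noteq> 0" "\<not> D * d \<le> X" using assms by auto
  have S: "D*d - X = D*k + Q" using assms(3) by simp
  have QD: "Q < D" using assms by simp
  have dv: "(D*k + Q) div D = k" "(D*k + Q) mod D = Q" using QD by auto
  have DQ: "D - Q = P" using assms by simp
  show ?thesis unfolding can_def using D S dv DQ assms(5) by simp
qed

lemma std_can:
  assumes a0: "a 0 = 0" and st: "std d s" and sin: "s \<in> monoms_in (d+3)"
  shows "s = can d a (lin (d+3) (ex d) s) (lin (d+3) (ey a) s) (lin (d+3) et s)"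
proof -
  have out: "\<And>j. d + 3 \<le> j \<Longrightarrow> lk s j = 0" using monoms_in_out[OF sin] by blast
  define s0 where "s0 = lk s 0"
  define s1 where "s1 = lk s 1"
  show ?thesis
  proof (cases "\<exists>j. 2 \<le> j \<and> j < d+3 \<and> 0 < lk s j")
    case False
    have s_eq: "s = m3 s0 s1 0"
    proof (rule poly_mapping_eqI)
      fix j
      show "lk s j = lk (m3 s0 s1 0) j"
      proof (cases "j < 2")
        case True
        then have "j = 0 \<or> j = 1" by auto
        then show ?thesis by (auto simp: lk_m3 s0_def s1_def)
      next
        case False2: False
        have "lk s j = 0"
        proof (cases "j < d + 3")
          case True
          then show ?thesis using False False2 by auto
        next
          case False
          then show ?thesis using out by simp
        qed
        then show ?thesis using False2 by (simp add: lk_m3)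
      qed
    qed
    have "lin (d+3) (ex d) s = s0" "lin (d+3) (ey a) s = s1" "lin (d+3) et s = 0"
      by (subst s_eq, simp add: lin_m3)+
    then show ?thesis by (simp add: can_def s_eq[symmetric])
  next
    case True
    define k0 where "k0 = (LEAST j. 2 \<le> j \<and> j < d+3 \<and> 0 < lk s j)"
    have k0: "2 \<le> k0" "k0 < d+3" "0 < lk s k0"
      using LeastI_ex[OF True] unfolding k0_def by auto
    have kmin: "\<And>j. 2 \<le> j \<Longrightarrow> j < k0 \<Longrightarrow> lk s j = 0"
    proof -
      fix j assume "2 \<le> j" "j < k0"
      then have "\<not> (2 \<le> j \<and> j < d+3 \<and> 0 < lk s j)" using not_less_Least[of j] k0 unfolding k0_def by blast
      then show "lk s j = 0" using \<open>2 \<le> j\<close> \<open>j < k0\<close> k0 by auto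
    qed
    have kmax: "\<And>j. k0 + 2 \<le> j \<Longrightarrow> lk s j = 0"
    proof -
      fix j assume j: "k0 + 2 \<le> j"
      show "lk s j = 0"
      proof (cases "j < d + 3")
        case True
        show ?thesis
        proof (rule ccontr)
          assume "lk s j \<noteq> 0"
          then have "2 \<le> k0 \<and> k0 + 2 \<le> j \<and> j \<le> d+2 \<and> 0 < lk s j \<and> 0 < lk s k0" using k0 j True by auto
          then show False using st unfolding std_def by blast
        qed
      next
        case False
        then show ?thesis using out by simp
      qed
    qed
    define P where "P = lk s k0"
    define Q where "Q = lk s (k0 + 1)"
    have Qout: "d + 3 \<le> k0 + 1 \<Longrightarrow> Q = 0" unfolding Q_def using out by simp
    have s_eq: "s = sg 0 s0 + sg 1 s1 + sg k0 P + sg (k0+1) Q"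
    proof (rule poly_mapping_eqI)
      fix j
      show "lk s j = lk (sg 0 s0 + sg 1 s1 + sg k0 P + sg (k0+1) Q) j"
      proof -
        consider "j = 0" | "j = 1" | "2 \<le> j \<and> j < k0" | "j = k0" | "j = k0 + 1" | "k0 + 2 \<le> j"
          by linarith
        then show ?thesis
          by cases (use k0 kmin kmax in \<open>auto simp: lookup_add lookup_single when_def s0_def s1_def P_def Q_def\<close>)
      qed
    qed
    obtain k where kk: "k0 = k + 2" using k0 by (metis add.commute le_Suc_ex)
    have kd: "k \<le> d" using k0 kk by simp
    have Pp: "0 < P" using k0 P_def by simp
    show ?thesis
    proof (cases "0 < s0")
      case True
      have "k0 = 2"
      proof (rule ccontr)
        assume "k0 \<noteq> 2"
        then have "1 \<le> k \<and> k \<le> d \<and> 0 < lk s 0 \<and> 0 < lk s (k+2)" using kk kd True k0 s0_def by auto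
        then show False using st unfolding std_def by blast
      qed
      have "Q = 0"
      proof (cases "3 < d + 3")
        case True
        show ?thesis
        proof (rule ccontr)
          assume "Q \<noteq> 0"
          have h3: "lk s (1+2) = Q" unfolding Q_def using \<open>k0 = 2\<close> by (simp add: numeral_3_eq_3)
          have "1 \<le> (1::nat) \<and> 1 \<le> d \<and> 0 < lk s 0 \<and> 0 < lk s (1+2)"
            using True \<open>0 < s0\<close> \<open>Q \<noteq> 0\<close> s0_def unfolding h3 by auto
          then show False using st unfolding std_def by blast
        qed
      next
        case False
        then show ?thesis using Qout \<open>k0 = 2\<close> by simp
      qed
      then have s_eq2: "s = m3 s0 s1 P" using s_eq \<open>k0 = 2\<close> unfolding m3_def by simp
      have "lin (d+3) (ex d) s = s0 + P * d" "lin (d+3) (ey a) s = s1" "lin (d+3) et s = P"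
        by (subst s_eq2, simp add: lin_m3 a0 numeral_2_eq_2)+
      then show ?thesis using Pp by (simp add: can_def s_eq2[symmetric])
    next
      case False
      then have s00: "s0 = 0" by simp
      have s_eq3: "s = sg 1 s1 + sg (k+2) P + sg (k+3) Q" using s_eq s00 kk by (simp add: add.assoc numeral_3_eq_3 numeral_2_eq_2)
      have linw: "lin (d+3) w s = s1 * w 1 + P * w (k+2) + Q * w (k+3)" for w
      proof -
        have "lin (d+3) w s = s1 * w 1 + P * w (k+2) + (if k + 3 < d + 3 then Q * w (k+3) else 0)"
          using kd by (subst s_eq3) (simp add: lin_add lin_single le_imp_less_Suc)
        then show ?thesis using Qout kk by auto
      qed
      have X: "lin (d+3) (ex d) s = P * (d - k) + Q * (d - (k+1))"
        using linw[of "ex d"] by (simp add: numeral_3_eq_3 numeral_2_eq_2)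
      have Y: "lin (d+3) (ey a) s = s1 + (P * a k + Q * a (k+1))"
        using linw[of "ey a"] by (simp add: numeral_3_eq_3 numeral_2_eq_2)
      have D: "lin (d+3) et s = P + Q"
        using linw[of "et"] by (simp add: numeral_3_eq_3 numeral_2_eq_2)
      have Qk: "0 < Q \<Longrightarrow> k + 1 \<le> d" using Qout kk by force
      show ?thesis
      proof (cases "k = 0 \<and> Q = 0")
        case True
        then have "s = m3 0 s1 P" using s_eq3 unfolding m3_def by (simp add: numeral_2_eq_2)
        then show ?thesis using X Y D True Pp a0 by (simp add: can_def)
      next
        case False
        have e1: "(P + Q) * d = P * (d - k) + Q * (d - (k+1)) + ((P + Q) * k + Q)"
        proof (cases "Q = 0")
          case True
          then show ?thesis using kd by (simp add: algebra_simps)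
        next
          case False
          then obtain r where "d = k + 1 + r" using Qk le_Suc_ex by blast
          then show ?thesis by (simp add: algebra_simps)
        qed
        have e2: "0 < (P + Q) * k + Q" using False Pp by auto
        have "can d a (P * (d - k) + Q * (d - (k+1))) (s1 + (P * a k + Q * a (k+1))) (P + Q)
            = sg 1 s1 + sg (k+2) P + sg (k+3) Q"
          by (rule can_third[OF Pp refl e1 e2 refl])
        then show ?thesis using X Y D s_eq3 by simp
      qed
    qed
  qed
qed

section \<open>Ideals\<close>

lemma ideal_gen_mono: "A \<subseteq> B \<Longrightarrow> ideal_gen n A \<subseteq> ideal_gen n B"
  unfolding ideal_gen_def by blast

lemma ideal_gen_zero: "0 \<in> ideal_gen n B"
  unfolding ideal_gen_def by (rule CollectI, rule exI[of _ "{}"]) simp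

lemma ideal_gen_add:
  assumes "f \<in> ideal_gen n B" "g \<in> ideal_gen n B"
  shows "f + g \<in> ideal_gen n (B :: 'k::comm_ring_1 mpoly set)"
proof -
  obtain S c where S: "finite S" "S \<subseteq> B" "\<forall>s\<in>S. c s \<in> polys_in n" "f = (\<Sum>s\<in>S. c s * s)"
    using assms(1) unfolding ideal_gen_def by blast
  obtain S' c' where S': "finite S'" "S' \<subseteq> B" "\<forall>s\<in>S'. c' s \<in> polys_in n" "g = (\<Sum>s\<in>S'. c' s * s)"
    using assms(2) unfolding ideal_gen_def by blast
  define e where "e s = (if s \<in> S then c s else 0) + (if s \<in> S' then c' s else 0)" for s
  have "(\<Sum>s\<in>S \<union> S'. e s * s) = (\<Sum>s\<in>S \<union> S'. (if s \<in> S then c s * s else 0)) + (\<Sum>s\<in>S \<union> S'. (if s \<in> S' then c' s * s else 0))"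
    unfolding e_def by (simp add: sum.distrib distrib_right if_distrib[of "\<lambda>x. x * _"] cong: if_cong)
  also have "\<dots> = f + g"
    using S S' by (simp add: sum.If_cases Int_absorb1 Int_absorb2)
  finally have eq: "f + g = (\<Sum>s\<in>S \<union> S'. e s * s)" by simp
  have "\<forall>s\<in>S \<union> S'. e s \<in> polys_in n"
    using S S' unfolding e_def by (auto intro: polys_in_add)
  then show ?thesis unfolding ideal_gen_def
    by (intro CollectI exI[of _ "S \<union> S'"] exI[of _ e]) (use S S' eq in auto)
qed

lemma ideal_gen_mult:
  assumes "p \<in> polys_in n" "f \<in> ideal_gen n B"
  shows "p * f \<in> ideal_gen n (B :: 'k::comm_ring_1 mpoly set)"
proof -
  obtain S c where S: "finite S" "S \<subseteq> B" "\<forall>s\<in>S. c s \<in> polys_in n" "f = (\<Sum>s\<in>S. c s * s)"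
    using assms(2) unfolding ideal_gen_def by blast
  have "p * f = (\<Sum>s\<in>S. (p * c s) * s)" using S by (simp add: sum_distrib_left mult.assoc)
  moreover have "\<forall>s\<in>S. p * c s \<in> polys_in n" using S(3) assms(1) polys_in_mult by auto
  ultimately show ?thesis unfolding ideal_gen_def
    by (intro CollectI exI[of _ S] exI[of _ "\<lambda>s. p * c s"]) (use S in auto)
qed

lemma ideal_gen_sub:
  assumes "A \<subseteq> ideal_gen n B"
  shows "ideal_gen n A \<subseteq> ideal_gen n (B :: 'k::comm_ring_1 mpoly set)"
proof
  fix f assume "f \<in> ideal_gen n A"
  then obtain S c where S: "finite S" "S \<subseteq> A" "\<forall>s\<in>S. c s \<in> polys_in n" "f = (\<Sum>s\<in>S. c s * s)"
    unfolding ideal_gen_def by blast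
  have "S \<subseteq> A \<Longrightarrow> (\<forall>s\<in>S. c s \<in> polys_in n) \<Longrightarrow> (\<Sum>s\<in>S. c s * s) \<in> ideal_gen n B"
    using S(1)
  proof (induction S rule: finite_induct)
    case empty
    then show ?case using ideal_gen_zero by simp
  next
    case (insert x F)
    then have "x \<in> ideal_gen n B" "c x \<in> polys_in n" using assms by auto
    then have "c x * x \<in> ideal_gen n B" using ideal_gen_mult by blast
    then show ?case using insert ideal_gen_add by simp
  qed
  then show "f \<in> ideal_gen n B" using S by simp
qed

section \<open>Groebner part\<close>

lemma rees_binom:
  assumes "L \<noteq> R" "L \<in> monoms_in (d+3)" "R \<in> monoms_in (d+3)" "Phi d a L = Phi d a R"
  shows "rees_map d a (mon L - mon R :: 'k::comm_ring_1 mpoly) = 0"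
proof -
  have "rees_map d a (mon L - mon R :: 'k mpoly) =
     (\<Sum>m\<in>{L, R}. sg (Phi d a m) (lk (mon L - mon R :: 'k mpoly) m))"
  proof -
    have k: "ks (mon L - mon R :: 'k mpoly) = {L, R}" by (rule keys_binom[OF assms(1)])
    have "rees_map d a (mon L - mon R :: 'k mpoly) =
     (\<Sum>m\<in>ks (mon L - mon R :: 'k mpoly). sg (Phi d a m) (lk (mon L - mon R :: 'k mpoly) m))"
      by (rule rees_map_formula[OF binom_polys[OF assms(2,3)]])
    then show ?thesis unfolding k .
  qed
  also have "\<dots> = sg (Phi d a L) 1 + sg (Phi d a R) (-1)"
    using assms(1) by (simp add: lookup_minus lk_mon)
  also have "\<dots> = 0" using assms(4) by (simp add: single_uminus)
  finally show ?thesis .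
qed

lemma fiber_sum:
  assumes "f \<in> polys_in (d+3)"
  shows "lk (rees_map d a f) e = (\<Sum>m\<in>ks f. if Phi d a m = e then lk f m else (0::'k::comm_ring_1))"
  using rees_map_formula[OF assms] by (simp add: lookup_sum lookup_single when_def)

lemma ideal_gen_base: "x \<in> B \<Longrightarrow> x \<in> ideal_gen n (B :: 'k::comm_ring_1 mpoly set)"
  unfolding ideal_gen_def
  by (intro CollectI exI[of _ "{x}"] exI[of _ "\<lambda>_. 1"]) (auto simp: polys_in_iff)

theorem groebner_part:
  fixes d :: nat and a :: "nat \<Rightarrow> nat"
    and ord :: "monom \<Rightarrow> monom \<Rightarrow> bool"
  assumes a0: "a 0 = 0"
    and a_incr: "\<And>i. 1 \<le> i \<Longrightarrow> i \<le> d \<Longrightarrow> a (i - 1) < a i"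
    and b_mono: "\<And>i. 1 \<le> i \<Longrightarrow> i + 1 \<le> d \<Longrightarrow> diff_seq a i \<le> diff_seq a (i + 1)"
    and ord: "term_order (d + 3) ord"
    and init_lin: "\<And>i. 1 \<le> i \<Longrightarrow> i \<le> d \<Longrightarrow>
        lead_monom ord (gb_linear a i :: 'k::comm_ring_1 mpoly) =
        lead_monom ord (Var 0 * Tv i :: 'k mpoly)"
    and init_quad: "\<And>i j. j < i \<Longrightarrow> i \<le> d \<Longrightarrow> 1 \<le> j \<Longrightarrow>
        lead_monom ord (gb_quad a i j :: 'k mpoly) = lead_monom ord (Tv i * Tv (j - 1) :: 'k mpoly)"
  shows "groebner_basis (d + 3) ord (gb_set d a :: 'k mpoly set) (rees_kernel d a)"
proof -
  have leadL: "lead_monom ord (gb_linear a i :: 'k mpoly) = LL i" if i: "1 \<le> i" "i \<le> d" for i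
  proof -
    have "lead_monom ord (Var 0 * Tv i :: 'k mpoly) = LL i"
      unfolding lin_lhs_eq by (rule lead_mon[OF ord LL_in[OF i(2)]])
    then show ?thesis using init_lin[OF i] by simp
  qed
  have leadQ: "lead_monom ord (gb_quad a i j :: 'k mpoly) = QL i j" if ij: "j < i" "i \<le> d" "1 \<le> j" for i j
  proof -
    have "lead_monom ord (Tv i * Tv (j - 1) :: 'k mpoly) = QL i j"
      unfolding quad_lhs_eq[OF ij(3)] by (rule lead_mon[OF ord QL_in[OF ij(2,1)]])
    then show ?thesis using init_quad[OF ij] by simp
  qed
  have gL: "(gb_linear a i :: 'k mpoly) = mon (LL i) - mon (LR a i)" if "1 \<le> i" for i
    by (rule gb_linear_eq[OF that])
  have gQ: "(gb_quad a i j :: 'k mpoly) = mon (QL i j) - mon (QR a i j)" if "1 \<le> j" "j < i" for i j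
    by (rule gb_quad_eq[OF that])
  have nzL: "(mon (LL i) - mon (LR a i) :: 'k mpoly) \<noteq> 0" for i by (rule binom_nz[OF LL_ne])
  have nzQ: "(mon (QL i j) - mon (QR a i j) :: 'k mpoly) \<noteq> 0" if "j < i" for i j by (rule binom_nz[OF QL_ne[OF that]])
  have hL: "ord (LR a i) (LL i)" if i: "1 \<le> i" "i \<le> d" for i
  proof -
    have "lead_monom ord (mon (LL i) - mon (LR a i) :: 'k mpoly) = LL i"
      using leadL[OF i] gL[OF i(1)] by simp
    then show ?thesis by (rule lead_binom[OF ord LL_ne LL_in[OF i(2)] LR_in[OF i(2)]])
  qed
  have hQ: "ord (QR a i j) (QL i j)" if ij: "j < i" "i \<le> d" "1 \<le> j" for i j
  proof -
    have "lead_monom ord (mon (QL i j) - mon (QR a i j) :: 'k mpoly) = QL i j"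
      using leadQ[OF ij] gQ[OF ij(3,1)] by simp
    then show ?thesis by (rule lead_binom[OF ord QL_ne[OF ij(1)] QL_in[OF ij(2,1)] QR_in[OF ij(2,1)]])
  qed
  have PL: "Phi d a (LL i) = Phi d a (LR a i)" if "1 \<le> i" "i \<le> d" for i
    using Phi_LL[OF a0 a_incr b_mono] that by blast
  have PQ: "Phi d a (QL i j) = Phi d a (QR a i j)" if "1 \<le> j" "j < i" "i \<le> d" for i j
    using Phi_QL[OF a0 a_incr b_mono] that by blast
  have pL: "(mon (LL i) - mon (LR a i) :: 'k mpoly) \<in> polys_in (d+3)" if "i \<le> d" for i
    by (rule binom_polys[OF LL_in[OF that] LR_in[OF that]])
  have pQ: "(mon (QL i j) - mon (QR a i j) :: 'k mpoly) \<in> polys_in (d+3)" if "i \<le> d" "j < i" for i j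
    by (rule binom_polys[OF QL_in[OF that] QR_in[OF that]])
  have rL: "rees_map d a (mon (LL i) - mon (LR a i) :: 'k mpoly) = 0" if "1 \<le> i" "i \<le> d" for i
    by (rule rees_binom[OF LL_ne LL_in[OF that(2)] LR_in[OF that(2)] PL[OF that]])
  have rQ: "rees_map d a (mon (QL i j) - mon (QR a i j) :: 'k mpoly) = 0" if "j < i" "i \<le> d" "1 \<le> j" for i j
    by (rule rees_binom[OF QL_ne[OF that(1)] QL_in[OF that(2,1)] QR_in[OF that(2,1)] PQ[OF that(3,1,2)]])
  have GH: "(gb_set d a :: 'k mpoly set) \<subseteq> rees_kernel d a"
  proof
    fix g :: "'k mpoly" assume "g \<in> gb_set d a"
    then consider (L) i where "1 \<le> i" "i \<le> d" "g = gb_linear a i"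
      | (Q) i j where "j < i" "i \<le> d" "1 \<le> j" "g = gb_quad a i j"
      unfolding gb_set_def by blast
    then show "g \<in> rees_kernel d a"
    proof cases
      case L
      then have "g = mon (LL i) - mon (LR a i)" using gL by simp
      then show ?thesis unfolding rees_kernel_def using pL[OF L(2)] rL[OF L(1,2)] by simp
    next
      case Q
      then have "g = mon (QL i j) - mon (QR a i j)" using gQ by simp
      then show ?thesis unfolding rees_kernel_def using pQ[OF Q(2,1)] rQ[OF Q(1,2,3)] by simp
    qed
  qed
  define inG where "inG = {(mon (lead_monom ord g) :: 'k mpoly) | g. g \<in> (gb_set d a :: 'k mpoly set) \<and> g \<noteq> 0}"
  define inH where "inH = {(mon (lead_monom ord f) :: 'k mpoly) | f. f \<in> (rees_kernel d a :: 'k mpoly set) \<and> f \<noteq> 0}"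
  have GinH: "inG \<subseteq> inH" unfolding inG_def inH_def using GH by blast
  have HinG: "inH \<subseteq> ideal_gen (d+3) inG"
  proof
    fix x assume "x \<in> inH"
    then obtain f :: "'k mpoly" where f: "f \<in> rees_kernel d a" "f \<noteq> 0" "x = mon (lead_monom ord f)"
      unfolding inH_def by blast
    have fp: "f \<in> polys_in (d+3)" and f0: "rees_map d a f = 0" using f unfolding rees_kernel_def by auto
    define m where "m = lead_monom ord f"
    have mk: "m \<in> ks f" and mmax: "\<forall>m'\<in>ks f. ord m' m" using lead_prop[OF ord fp f(2)] unfolding m_def by auto
    have kin: "ks f \<subseteq> monoms_in (d+3)" using fp by (simp add: polys_in_iff)
    have min: "m \<in> monoms_in (d+3)" using mk kin by blast
    have nst: "\<not> std d m"
    proof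
      assume st: "std d m"
      have "lk (rees_map d a f) (Phi d a m) = 0" using f0 by simp
      then have sum0: "(\<Sum>m'\<in>ks f. if Phi d a m' = Phi d a m then lk f m' else 0) = 0"
        using fiber_sum[OF fp] by simp
      have "\<exists>m'\<in>ks f. m' \<noteq> m \<and> Phi d a m' = Phi d a m"
      proof (rule ccontr)
        assume nex: "\<not> (\<exists>m'\<in>ks f. m' \<noteq> m \<and> Phi d a m' = Phi d a m)"
        have "(\<Sum>m'\<in>ks f. if Phi d a m' = Phi d a m then lk f m' else 0) = (\<Sum>m'\<in>ks f. if m' = m then lk f m' else 0)"
          using nex by (intro sum.cong) auto
        also have "\<dots> = lk f m" using mk by (simp add: sum.delta')
        finally have "lk f m = 0" using sum0 by simp
        then show False using mk by (simp add: in_keys_iff)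
      qed
      then obtain m' where m': "m' \<in> ks f" "m' \<noteq> m" "Phi d a m' = Phi d a m" by blast
      have m'in: "m' \<in> monoms_in (d+3)" using m' kin by blast
      obtain s where s: "std d s" "s \<in> monoms_in (d+3)" "Phi d a s = Phi d a m'" "ord s m'"
        using descent[OF ord hL hQ PL PQ m'in] by blast
      have "Phi d a s = Phi d a m" using s m' by simp
      then have ll: "lin (d+3) (ex d) s = lin (d+3) (ex d) m" "lin (d+3) (ey a) s = lin (d+3) (ey a) m"
         "lin (d+3) et s = lin (d+3) et m" unfolding Phi_def m3_eq_iff by auto
      have "s = m" using std_can[where a=a and d=d and s=s, OF a0 s(1,2)] std_can[where a=a and d=d and s=m, OF a0 st min] ll by simp
      then have "ord m m'" using s by simp
      moreover have "ord m' m" using mmax m' by blast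
      ultimately have "m = m'" using to_antisym[OF ord min m'in] by blast
      then show False using m' by simp
    qed
    have mon_in: "mon m \<in> ideal_gen (d+3) inG"
      using nonstd_split[OF min nst]
    proof
      assume "\<exists>i u. 1 \<le> i \<and> i \<le> d \<and> u \<in> monoms_in (d+3) \<and> m = LL i + u"
      then obtain i u where iu: "1 \<le> i" "i \<le> d" "u \<in> monoms_in (d+3)" "m = LL i + u" by blast
      have gin: "(gb_linear a i :: 'k mpoly) \<in> gb_set d a" unfolding gb_set_def using iu by blast
      have gnz: "(gb_linear a i :: 'k mpoly) \<noteq> 0" using gL[OF iu(1)] nzL by simp
      have "mon (LL i) \<in> inG" unfolding inG_def using gin gnz leadL[OF iu(1,2)] by force
      then have "mon u * mon (LL i) \<in> ideal_gen (d+3) inG"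
        using ideal_gen_mult[OF polys_in_mon[OF iu(3)] ideal_gen_base] by blast
      then show ?thesis using iu by (simp add: mon_mult add.commute)
    next
      assume "\<exists>i j u. j < i \<and> i \<le> d \<and> 1 \<le> j \<and> u \<in> monoms_in (d+3) \<and> m = QL i j + u"
      then obtain i j u where iu: "j < i" "i \<le> d" "1 \<le> j" "u \<in> monoms_in (d+3)" "m = QL i j + u" by blast
      have gin: "(gb_quad a i j :: 'k mpoly) \<in> gb_set d a" unfolding gb_set_def using iu by blast
      have gnz: "(gb_quad a i j :: 'k mpoly) \<noteq> 0" using gQ[OF iu(3,1)] nzQ[OF iu(1)] by simp
      have "mon (QL i j) \<in> inG" unfolding inG_def using gin gnz leadQ[OF iu(1,2,3)] by force
      then have "mon u * mon (QL i j) \<in> ideal_gen (d+3) inG"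
        using ideal_gen_mult[OF polys_in_mon[OF iu(4)] ideal_gen_base] by blast
      then show ?thesis using iu by (simp add: mon_mult add.commute)
    qed
    then show "x \<in> ideal_gen (d+3) inG" using f(3) m_def by simp
  qed
  have "ideal_gen (d+3) inH = ideal_gen (d+3) inG"
    using ideal_gen_sub[OF HinG] ideal_gen_mono[OF GinH] by blast
  then show ?thesis unfolding groebner_basis_def inG_def inH_def using GH by simp
qed

definition Lf :: "nat \<Rightarrow> (nat \<Rightarrow> nat) \<Rightarrow> nat \<Rightarrow> monom \<Rightarrow> int" where
  "Lf d a i e = int (lk e 1) + int (bb a i) * int (lk e 0)
      - int (lk e 2) * (int (a i) + int (bb a i) * int (d - i))"

definition cone :: "nat \<Rightarrow> (nat \<Rightarrow> nat) \<Rightarrow> monom \<Rightarrow> bool" where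
  "cone d a e \<longleftrightarrow> e \<in> monoms_in 3 \<and> (\<forall>i. 1 \<le> i \<and> i \<le> d \<longrightarrow> 0 \<le> Lf d a i e)"

lemma m3_expand: "e \<in> monoms_in 3 \<Longrightarrow> e = m3 (lk e 0) (lk e 1) (lk e 2)"
proof (rule poly_mapping_eqI)
  fix j assume e: "e \<in> monoms_in 3"
  show "lk e j = lk (m3 (lk e 0) (lk e 1) (lk e 2)) j"
  proof (cases "j < 3")
    case True
    then have "j = 0 \<or> j = 1 \<or> j = 2" by auto
    then show ?thesis by (auto simp: lk_m3)
  next
    case False
    then show ?thesis using monoms_in_out[OF e, of j] by (auto simp: lk_m3)
  qed
qed

lemma lk_Phi: "lk (Phi d a m) 0 = lin (d+3) (ex d) m" "lk (Phi d a m) 1 = lin (d+3) (ey a) m"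
  "lk (Phi d a m) 2 = lin (d+3) et m"
  unfolding Phi_def by (simp_all add: lk_m3)

lemma int_lin: "int (lin n w m) = (\<Sum>j<n. int (lk m j) * int (w j))"
  unfolding lin_def by simp

lemma Lf_add: "Lf d a i (e + e') = Lf d a i e + Lf d a i e'"
  unfolding Lf_def by (simp add: lookup_add algebra_simps)

lemma Lf_zero[simp]: "Lf d a i 0 = 0"
  unfolding Lf_def by simp

lemma cone_add: "cone d a e \<Longrightarrow> cone d a e' \<Longrightarrow> cone d a (e + e')"
  unfolding cone_def
proof (elim conjE, intro conjI allI impI)
  assume "e \<in> monoms_in 3" "e' \<in> monoms_in 3"
  then show "e + e' \<in> monoms_in 3" by (rule monoms_in_add)
next
  fix i assume "\<forall>i. 1 \<le> i \<and> i \<le> d \<longrightarrow> 0 \<le> Lf d a i e" "\<forall>i. 1 \<le> i \<and> i \<le> d \<longrightarrow> 0 \<le> Lf d a i e'"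
    "1 \<le> i \<and> i \<le> d"
  then show "0 \<le> Lf d a i (e + e')" by (simp add: Lf_add)
qed

lemma cone_zero: "cone d a 0"
  unfolding cone_def by simp

context
  fixes d :: nat and a :: "nat \<Rightarrow> nat"
  assumes a0: "a 0 = 0"
    and a_incr: "\<And>i. 1 \<le> i \<Longrightarrow> i \<le> d \<Longrightarrow> a (i - 1) < a i"
    and b_mono: "\<And>i. 1 \<le> i \<Longrightarrow> i + 1 \<le> d \<Longrightarrow> diff_seq a i \<le> diff_seq a (i + 1)"
begin

lemma Phi_cone:
  assumes m: "m \<in> monoms_in (d+3)"
  shows "cone d a (Phi d a m)"
  unfolding cone_def
proof (intro conjI allI impI)
  show "Phi d a m \<in> monoms_in 3" unfolding Phi_def by (rule monoms_in_m3) simp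
  fix i assume i: "1 \<le> i \<and> i \<le> d"
  define b where "b = int (bb a i)"
  define c where "c = int (a i) + b * int (d - i)"
  define T where "T j = int (ey a j) + b * int (ex d j) - int (et j) * c" for j
  have eq: "Lf d a i (Phi d a m) = (\<Sum>j<d+3. int (lk m j) * T j)"
    unfolding Lf_def lk_Phi int_lin T_def b_def[symmetric] c_def[symmetric]
    by (simp add: algebra_simps sum.distrib sum_subtractf sum_distrib_left sum_distrib_right)
  have T0: "0 \<le> T j" if "j < d + 3" for j
  proof -
    have "j = 0 \<or> j = 1 \<or> (\<exists>l. j = Suc (Suc l) \<and> l \<le> d)" using \<open>j < d+3\<close>
      by (cases j; cases "j - 1") auto
    then consider "j = 0" | "j = 1" | l where "j = Suc (Suc l)" "l \<le> d" by blast
    then show ?thesis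
    proof cases
      case 1 then show ?thesis by (simp add: T_def b_def)
    next
      case 2 then show ?thesis by (simp add: T_def)
    next
      case 3
      have cv: "int (bb a i) * (int l - int i) \<le> int (a l) - int (a i)"
        using convex[where d=d and a=a and i=i and l=l, OF a0 a_incr b_mono] i 3 by simp
      have "int (d - l) = int d - int l" "int (d - i) = int d - int i" using 3 i by auto
      then show ?thesis using cv 3 by (simp add: T_def c_def b_def algebra_simps)
    qed
  qed
  show "0 \<le> Lf d a i (Phi d a m)" unfolding eq
    by (rule sum_nonneg) (use T0 in auto)
qed

lemma ex2: "ex d 2 = d" and ey2: "ey a 2 = a 0" and et2: "et 2 = 1"
  by (simp_all add: ex_def ey_def et_def)

lemma lin3: "k + 2 < n \<Longrightarrow> (q = 0 \<or> k + 3 < n) \<Longrightarrow>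
  lin n w (sg 1 y + sg (k+2) p + sg (k+3) q) = y * w 1 + p * w (k+2) + q * w (k+3)"
  by (auto simp: lin_add lin_single)

lemma can_cone:
  assumes ce: "cone d a e"
  shows "can d a (lk e 0) (lk e 1) (lk e 2) \<in> monoms_in (d+3) \<and> Phi d a (can d a (lk e 0) (lk e 1) (lk e 2)) = e"
proof -
  define X where "X = lk e 0"
  define Y where "Y = lk e 1"
  define D where "D = lk e 2"
  have e3: "e = m3 X Y D" using m3_expand ce unfolding cone_def X_def Y_def D_def by blast
  have Lf_ge: "0 \<le> int Y + int (bb a i) * int X - int D * (int (a i) + int (bb a i) * int (d - i))"
    if "1 \<le> i" "i \<le> d" for i
    using ce that unfolding cone_def Lf_def X_def Y_def D_def by auto
  have n3: "3 \<le> d + 3" by simp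
  consider "D = 0" | "D \<noteq> 0" "D*d \<le> X" | "D \<noteq> 0" "\<not> D*d \<le> X" by blast
  then have "can d a X Y D \<in> monoms_in (d+3) \<and> Phi d a (can d a X Y D) = m3 X Y D"
  proof cases
    case 1
    then show ?thesis unfolding can_def Phi_def using n3
      by (simp add: lin_m3 ex2 ey2 et2 monoms_in_m3)
  next
    case 2
    then show ?thesis unfolding can_def Phi_def using n3
      by (simp add: lin_m3 ex2 ey2 et2 monoms_in_m3 a0)
  next
    case 3
    define S where "S = D*d - X"
    define k where "k = S div D"
    define q where "q = S mod D"
    have Dp: "0 < D" using 3 by simp
    have Sk: "D*k + q = S" unfolding k_def q_def by (simp add: mult.commute)
    have SX: "S + X = D*d" using 3 unfolding S_def by simp
    have qD: "q < D" unfolding q_def using Dp by simp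
    have kd: "k \<le> d"
    proof -
      have "D*k \<le> D*d" using Sk SX by linarith
      then show ?thesis using Dp by simp
    qed
    have qk: "k < d" if "0 < q"
    proof (rule ccontr)
      assume "\<not> k < d"
      then have "k = d" using kd by simp
      then show False using Sk SX that by simp
    qed
    have k1: "1 \<le> k" if "q = 0"
    proof (rule ccontr)
      assume "\<not> 1 \<le> k"
      then have "k = 0" by simp
      then have "S = 0" using Sk that by simp
      then show False using SX 3 by simp
    qed
    have beta: "(D - q) * a k + q * a (k+1) \<le> Y"
    proof (cases "q = 0")
      case True
      have Xe: "X = D * (d - k)" using Sk SX True by (simp add: diff_mult_distrib2)
      have "0 \<le> int Y + int (bb a k) * int X - int D * (int (a k) + int (bb a k) * int (d - k))"
        using Lf_ge[of k] k1[OF True] kd by simp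
      moreover have "int (bb a k) * int X = int D * (int (bb a k) * int (d - k))" unfolding Xe by simp
      moreover have "int D * (int (a k) + int (bb a k) * int (d - k)) = int D * int (a k) + int D * (int (bb a k) * int (d - k))"
        by (simp add: distrib_left)
      ultimately have "int D * int (a k) \<le> int Y" by linarith
      then show ?thesis using True by (simp flip: of_nat_mult)
    next
      case False
      then have kd': "k + 1 \<le> d" using qk by simp
      obtain r where r: "d = k + 1 + r" using kd' le_Suc_ex by blast
      have Xe: "X = D * r + (D - q)" using Sk SX qD r by (simp add: algebra_simps)
      have ak: "a (k+1) = a k + bb a (k+1)" using a_step[OF a0 a_incr b_mono, of "k+1"] kd' by simp
      have dk: "d - (k+1) = r" using r by simp
      have "0 \<le> int Y + int (bb a (k+1)) * int X - int D * (int (a (k+1)) + int (bb a (k+1)) * int (d - (k+1)))"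
        using Lf_ge[of "k+1"] kd' by simp
      then have "int D * int (a k) + int q * int (bb a (k+1)) \<le> int Y"
        unfolding Xe ak dk using qD by (simp add: of_nat_diff algebra_simps)
      moreover have "int ((D - q) * a k + q * a (k+1)) = int D * int (a k) + int q * int (bb a (k+1))"
      proof -
        obtain t where t: "D = q + t" using qD less_imp_add_positive by blast
        have "(D - q) * a k + q * a (k+1) = D * a k + q * bb a (k+1)"
          unfolding ak t by (simp add: algebra_simps)
        then show ?thesis by simp
      qed
      ultimately show ?thesis by linarith
    qed
    have can_eq: "can d a X Y D = sg 1 (Y - ((D - q) * a k + q * a (k+1))) + sg (k+2) (D - q) + sg (k+3) q"
      unfolding can_def using 3 by (simp add: S_def[symmetric] k_def[symmetric] q_def[symmetric])
    have cond: "k + 2 < d + 3" "q = 0 \<or> k + 3 < d + 3" using kd qk by auto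
    have mon: "can d a X Y D \<in> monoms_in (d+3)"
    proof -
      have "sg (k+3) q \<in> monoms_in (d+3)" using cond by (cases "q = 0") (auto intro: monoms_in_single)
      moreover have "sg 1 (Y - ((D - q) * a k + q * a (k+1))) \<in> monoms_in (d+3)" by (rule monoms_in_single) simp
      moreover have "sg (k+2) (D - q) \<in> monoms_in (d+3)" using cond by (intro monoms_in_single) simp
      ultimately show ?thesis unfolding can_eq by (intro monoms_in_add)
    qed
    have lx: "(D - q) * ex d (k+2) + q * ex d (k+3) = X"
    proof (cases "q = 0")
      case True
      then show ?thesis using Sk SX by (simp add: numeral_3_eq_3 numeral_2_eq_2 diff_mult_distrib2)
    next
      case False
      then have kd': "k + 1 \<le> d" using qk by simp
      obtain r where r: "d = k + 1 + r" using kd' le_Suc_ex by blast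
      obtain t where t: "D = q + t" using qD less_imp_add_positive by blast
      have "X = D * r + (D - q)" using Sk SX qD r by (simp add: algebra_simps)
      then have "X = (q + t) * r + t" using t by simp
      then show ?thesis using r t by (simp add: numeral_3_eq_3 numeral_2_eq_2 algebra_simps)
    qed
    have ly: "(Y - ((D - q) * a k + q * a (k+1))) + (D - q) * ey a (k+2) + q * ey a (k+3) = Y"
      using beta by (simp add: numeral_3_eq_3 numeral_2_eq_2)
    have lt: "(D - q) * et (k+2) + q * et (k+3) = D"
      using qD by (simp add: numeral_3_eq_3 numeral_2_eq_2)
    have "Phi d a (can d a X Y D) = m3 X Y D"
      unfolding Phi_def can_eq lin3[OF cond] using lx ly lt by (simp add: add.assoc)
    then show ?thesis using mon by simp
  qed
  then show ?thesis using e3 unfolding X_def Y_def D_def by simp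
qed

end

definition Aset :: "nat \<Rightarrow> (nat \<Rightarrow> nat) \<Rightarrow> 'k::comm_ring_1 mpoly set" where
  "Aset d a = {f. ks f \<subseteq> Collect (cone d a)}"

lemma Aset_add: "f \<in> Aset d a \<Longrightarrow> g \<in> Aset d a \<Longrightarrow> f + g \<in> Aset d a"
  unfolding Aset_def using keys_add[of f g] by auto

lemma Aset_uminus: "f \<in> Aset d a \<Longrightarrow> - f \<in> Aset d a"
  unfolding Aset_def by simp

lemma Aset_diff: "f \<in> Aset d a \<Longrightarrow> g \<in> Aset d a \<Longrightarrow> f - g \<in> Aset d a"
  unfolding Aset_def using keys_diff[of f g] by auto

lemma Aset_mult:
  assumes "f \<in> Aset d a" "g \<in> Aset d a"
  shows "f * g \<in> Aset d a"
proof -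
  have "ks (f * g) \<subseteq> Collect (cone d a)"
  proof
    fix x assume "x \<in> ks (f * g)"
    then obtain u v where "x = u + v" "u \<in> ks f" "v \<in> ks g" using keys_mult[of f g] by blast
    then show "x \<in> Collect (cone d a)" using assms cone_add unfolding Aset_def by blast
  qed
  then show ?thesis unfolding Aset_def by simp
qed

lemma Aset_single: "cone d a e \<Longrightarrow> sg e c \<in> Aset d a"
  unfolding Aset_def by simp

lemma Aset_zero: "0 \<in> Aset d a"
  unfolding Aset_def by simp

lemma Aset_one: "1 \<in> Aset d a"
  unfolding Aset_def using cone_zero by simp

lemma Aset_of_nat: "(of_nat k :: 'k::comm_ring_1 mpoly) \<in> Aset d a"
proof -
  have "(of_nat k :: 'k mpoly) = sg 0 (of_nat k)" by simp
  then show ?thesis using Aset_single[OF cone_zero] by metis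
qed

lemma Aset_pow: "f \<in> Aset d a \<Longrightarrow> f ^ k \<in> Aset d a"
  by (induction k) (simp_all add: Aset_one Aset_mult)

lemma Aset_sum: "(\<And>x. x \<in> S \<Longrightarrow> h x \<in> Aset d a) \<Longrightarrow> sum h S \<in> Aset d a"
proof (induction S rule: infinite_finite_induct)
  case (infinite A)
  then show ?case by (simp add: Aset_zero)
next
  case empty
  then show ?case by (simp add: Aset_zero)
next
  case (insert x F)
  then show ?case by (simp add: Aset_add)
qed

lemma rees_map_K:
  assumes "f \<in> polys_in (d+3)" "finite K" "ks f \<subseteq> K"
  shows "rees_map d a f = (\<Sum>m\<in>K. sg (Phi d a m) (lk f m) :: 'k::comm_ring_1 mpoly)"
  unfolding rees_map_formula[OF assms(1)]
  by (rule sum.mono_neutral_left) (use assms in \<open>auto simp: in_keys_iff\<close>)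

lemma poly_expand: "f = (\<Sum>e\<in>ks f. sg e (lk f e))"
proof (rule poly_mapping_eqI)
  fix k
  have "lk (\<Sum>e\<in>ks f. sg e (lk f e)) k = (\<Sum>e\<in>ks f. if e = k then lk f e else 0)"
    by (simp add: lookup_sum lookup_single when_def)
  also have "\<dots> = lk f k" by (simp add: sum.delta' in_keys_iff)
  finally show "lk f k = lk (\<Sum>e\<in>ks f. sg e (lk f e)) k" by simp
qed

context
  fixes d :: nat and a :: "nat \<Rightarrow> nat"
  assumes a0: "a 0 = 0"
    and a_incr: "\<And>i. 1 \<le> i \<Longrightarrow> i \<le> d \<Longrightarrow> a (i - 1) < a i"
    and b_mono: "\<And>i. 1 \<le> i \<Longrightarrow> i + 1 \<le> d \<Longrightarrow> diff_seq a i \<le> diff_seq a (i + 1)"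
begin

lemma rees_sub: "(rees_algebra d a :: 'k::comm_ring_1 mpoly set) \<subseteq> Aset d a"
proof
  fix f :: "'k mpoly" assume "f \<in> rees_algebra d a"
  then obtain g :: "'k mpoly" where g: "g \<in> polys_in (d+3)" "f = rees_map d a g" unfolding rees_algebra_def by blast
  have "ks f \<subseteq> (\<Union>m\<in>ks g. ks (sg (Phi d a m) (lk g m)))"
    unfolding g(2) rees_map_formula[OF g(1)] by (rule keys_sum)
  also have "\<dots> \<subseteq> Collect (cone d a)"
  proof
    fix x assume "x \<in> (\<Union>m\<in>ks g. ks (sg (Phi d a m) (lk g m)))"
    then obtain m where m: "m \<in> ks g" "x = Phi d a m" by (auto split: if_splits)
    have "m \<in> monoms_in (d+3)" using g(1) m(1) by (auto simp: polys_in_iff)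
    then show "x \<in> Collect (cone d a)" using Phi_cone[where d=d and a=a, OF a0 a_incr b_mono] m by simp
  qed
  finally show "f \<in> Aset d a" unfolding Aset_def by simp
qed

lemma rees_sup: "Aset d a \<subseteq> (rees_algebra d a :: 'k::comm_ring_1 mpoly set)"
proof
  fix f :: "'k mpoly" assume f: "f \<in> Aset d a"
  define cn where "cn e = can d a (lk e 0) (lk e 1) (lk e 2)" for e :: monom
  have cc: "cn e \<in> monoms_in (d+3) \<and> Phi d a (cn e) = e" if "e \<in> ks f" for e
    using can_cone[where d=d and a=a, OF a0 a_incr b_mono] f that unfolding Aset_def cn_def by blast
  have inj: "inj_on cn (ks f)"
    by (rule inj_onI) (metis cc)
  define g where "g = (\<Sum>e\<in>ks f. sg (cn e) (lk f e))"
  have kg: "ks g \<subseteq> cn ` ks f"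
  proof -
    have "ks g \<subseteq> (\<Union>e\<in>ks f. ks (sg (cn e) (lk f e)))" unfolding g_def by (rule keys_sum)
    also have "\<dots> \<subseteq> cn ` ks f" by (auto split: if_splits)
    finally show ?thesis .
  qed
  have gp: "g \<in> polys_in (d+3)" unfolding polys_in_iff using kg cc by blast
  have lg: "lk g (cn e) = lk f e" if "e \<in> ks f" for e
  proof -
    have "lk g (cn e) = (\<Sum>e'\<in>ks f. if e' = e then lk f e' else 0)"
      unfolding g_def lookup_sum
      by (rule sum.cong) (use inj that in \<open>auto simp: lookup_single when_def inj_on_eq_iff\<close>)
    also have "\<dots> = lk f e" using that by simp
    finally show ?thesis .
  qed
  have "rees_map d a g = (\<Sum>m\<in>cn ` ks f. sg (Phi d a m) (lk g m))"
    by (rule rees_map_K[OF gp _ kg]) simp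
  also have "\<dots> = (\<Sum>e\<in>ks f. sg (Phi d a (cn e)) (lk g (cn e)))"
    by (rule sum.reindex[OF inj, unfolded comp_def])
  also have "\<dots> = (\<Sum>e\<in>ks f. sg e (lk f e))"
    by (rule sum.cong) (use cc lg in auto)
  also have "\<dots> = f" by (rule poly_expand[symmetric])
  finally show "f \<in> rees_algebra d a" unfolding rees_algebra_def using gp by blast
qed

lemma rees_eq: "(rees_algebra d a :: 'k::comm_ring_1 mpoly set) = Aset d a"
  using rees_sub rees_sup by blast

end

definition lm :: "'k::zero mpoly \<Rightarrow> monom" where "lm f = Max (ks f)"
definition lc :: "'k::zero mpoly \<Rightarrow> 'k" where "lc f = lk f (lm f)"

lemma lm_in: "f \<noteq> 0 \<Longrightarrow> lm f \<in> ks f"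
  unfolding lm_def by (rule Max_in) auto

lemma lm_max: "m \<in> ks f \<Longrightarrow> m \<le> lm f"
  unfolding lm_def by (rule Max_ge) auto

lemma lc_nz: "f \<noteq> 0 \<Longrightarrow> lc f \<noteq> 0"
  unfolding lc_def using lm_in by (simp add: in_keys_iff)

lemma lm_sg: "c \<noteq> 0 \<Longrightarrow> lm (sg e c) = e" "c \<noteq> 0 \<Longrightarrow> lc (sg e c) = c"
  unfolding lc_def lm_def by simp_all

lemma below_lm:
  fixes f :: "'k::comm_ring_1 mpoly"
  assumes "f \<noteq> 0"
  shows "\<forall>x\<in>ks (f - sg (lm f) (lc f)). x < lm f"
proof
  fix x assume x: "x \<in> ks (f - sg (lm f) (lc f))"
  then have "x \<noteq> lm f" by (auto simp: in_keys_iff lookup_minus lc_def)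
  moreover have "x \<in> ks f" using x by (auto simp: in_keys_iff lookup_minus lookup_single when_def lc_def split: if_splits)
  ultimately show "x < lm f" using lm_max[of x f] by simp
qed

lemma lk_mult_not_key:
  fixes f g :: "'k::comm_ring_1 mpoly"
  assumes "\<And>u v. u \<in> ks f \<Longrightarrow> v \<in> ks g \<Longrightarrow> u + v \<noteq> k"
  shows "lk (f * g) k = 0"
proof -
  have "k \<notin> ks (f * g)" using keys_mult[of f g] assms by blast
  then show ?thesis by (simp add: in_keys_iff)
qed

lemma lm_mult:
  fixes f g :: "'k::idom mpoly"
  assumes f: "f \<noteq> 0" and g: "g \<noteq> 0"
  shows "f * g \<noteq> 0 \<and> lm (f * g) = lm f + lm g \<and> lc (f * g) = lc f * lc g"
proof -
  define Mf where "Mf = lm f"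
  define Mg where "Mg = lm g"
  define f1 where "f1 = f - sg Mf (lc f)"
  define g1 where "g1 = g - sg Mg (lc g)"
  have f1: "\<forall>x\<in>ks f1. x < Mf" using below_lm[OF f] unfolding f1_def Mf_def .
  have g1: "\<forall>x\<in>ks g1. x < Mg" using below_lm[OF g] unfolding g1_def Mg_def .
  have dec: "f * g = sg Mf (lc f) * sg Mg (lc g) + sg Mf (lc f) * g1 + f1 * g"
    unfolding f1_def g1_def by (simp add: algebra_simps)
  have z1: "lk (sg Mf (lc f) * g1) (Mf + Mg) = 0"
  proof (rule lk_mult_not_key)
    fix u v assume "u \<in> ks (sg Mf (lc f))" "v \<in> ks g1"
    then have "u = Mf" "v < Mg" using g1 by (auto split: if_splits)
    then show "u + v \<noteq> Mf + Mg" using add_strict_left_mono[of v Mg Mf] by auto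
  qed
  have z2: "lk (f1 * g) (Mf + Mg) = 0"
  proof (rule lk_mult_not_key)
    fix u v assume "u \<in> ks f1" "v \<in> ks g"
    then have "u < Mf" "v \<le> Mg" using f1 lm_max[of v g] unfolding Mg_def by auto
    then show "u + v \<noteq> Mf + Mg" using add_less_le_mono[of u Mf v Mg] by auto
  qed
  have top: "lk (f * g) (Mf + Mg) = lc f * lc g"
    unfolding dec by (simp add: lookup_add z1 z2 mult_single)
  have nz: "lc f * lc g \<noteq> 0" using lc_nz[OF f] lc_nz[OF g] by simp
  have fg: "f * g \<noteq> 0" using top nz by auto
  have inkeys: "Mf + Mg \<in> ks (f * g)" using top nz by (simp add: in_keys_iff)
  have le: "x \<le> Mf + Mg" if xin: "x \<in> ks (f * g)" for x
  proof -
    obtain u v where "x = u + v" "u \<in> ks f" "v \<in> ks g" using keys_mult[of f g] xin by blast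
    then show ?thesis using lm_max[of u f] lm_max[of v g] add_mono unfolding Mf_def Mg_def by blast
  qed
  have lmfg: "lm (f * g) = Mf + Mg"
    unfolding lm_def by (rule Max_eqI) (use inkeys le in auto)
  show ?thesis using fg lmfg top unfolding lc_def Mf_def Mg_def by simp
qed

lemma lm_pow:
  fixes p :: "'k::idom mpoly"
  assumes "p \<noteq> 0"
  shows "p ^ k \<noteq> 0 \<and> lk (lm (p ^ k)) j = k * lk (lm p) j"
proof (induction k)
  case 0
  have "lm (1 :: 'k mpoly) = 0" unfolding lm_def by simp
  then show ?case by simp
next
  case (Suc k)
  then show ?case using lm_mult[OF assms, of "p ^ k"] by (simp add: lookup_add)
qed

definition key3 :: "monom \<Rightarrow> nat \<times> nat \<times> nat" where "key3 e = (lk e 0, lk e 1, lk e 2)"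
definition lex3 :: "((nat \<times> nat \<times> nat) \<times> (nat \<times> nat \<times> nat)) set" where
  "lex3 = less_than <*lex*> (less_than <*lex*> less_than)"

lemma wf_lex3: "wf lex3" unfolding lex3_def by auto

lemma less_lex3:
  assumes "e \<in> monoms_in 3" "e' \<in> monoms_in 3" "e < e'"
  shows "(key3 e, key3 e') \<in> lex3"
proof -
  have "less_fun (lk e) (lk e')" using assms(3) by (simp add: less_poly_mapping.rep_eq)
  then obtain k where k: "lk e k < lk e' k" "\<And>k'. k' < k \<Longrightarrow> lk e k' = lk e' k'"
    by (auto simp: less_fun_def)
  have "k < 3"
  proof (rule ccontr)
    assume "\<not> k < 3"
    then have "lk e' k = 0" using monoms_in_out[OF assms(2)] by simp
    then show False using k by simp
  qed
  then have "k = 0 \<or> k = 1 \<or> k = 2" by auto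
  then show ?thesis using k unfolding key3_def lex3_def by auto
qed

definition AI :: "nat \<Rightarrow> (nat \<Rightarrow> nat) \<Rightarrow> 'k::comm_ring_1 mpoly \<Rightarrow> nat \<Rightarrow> 'k mpoly \<Rightarrow> bool" where
  "AI d a q N p \<longleftrightarrow> (\<forall>k. \<exists>r\<in>Aset d a. q ^ N * p ^ k = r * q ^ k)"

lemma lm_cone: "f \<in> Aset d a \<Longrightarrow> f \<noteq> 0 \<Longrightarrow> cone d a (lm f)"
  unfolding Aset_def using lm_in by blast

lemma key_step:
  fixes p q :: "'k::field mpoly"
  assumes pA: "p \<in> Aset d a" and qA: "q \<in> Aset d a" and p0: "p \<noteq> 0" and q0: "q \<noteq> 0"
    and ai: "AI d a q N p"
  shows "(\<forall>j. lk (lm q) j \<le> lk (lm p) j) \<and> cone d a (lm p - lm q)"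
proof -
  define ep where "ep = lm p"
  define eq where "eq = lm q"
  have coord: "\<exists>e. cone d a e \<and> (\<forall>j. lk e j + k * lk eq j = N * lk eq j + k * lk ep j)" for k
  proof -
    obtain r where r: "r \<in> Aset d a" "q ^ N * p ^ k = r * q ^ k" using ai unfolding AI_def by blast
    have qN: "q ^ N \<noteq> 0" "\<And>j. lk (lm (q ^ N)) j = N * lk eq j" using lm_pow[OF q0] unfolding eq_def by auto
    have pk: "p ^ k \<noteq> 0" "\<And>j. lk (lm (p ^ k)) j = k * lk ep j" using lm_pow[OF p0] unfolding ep_def by auto
    have qk: "q ^ k \<noteq> 0" "\<And>j. lk (lm (q ^ k)) j = k * lk eq j" using lm_pow[OF q0] unfolding eq_def by auto
    have lhs: "q ^ N * p ^ k \<noteq> 0" "lm (q ^ N * p ^ k) = lm (q ^ N) + lm (p ^ k)"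
      using lm_mult[OF qN(1) pk(1)] by auto
    have r0: "r \<noteq> 0" using lhs(1) r(2) by auto
    have rhs: "lm (r * q ^ k) = lm r + lm (q ^ k)" using lm_mult[OF r0 qk(1)] by auto
    have "\<forall>j. lk (lm r) j + k * lk eq j = N * lk eq j + k * lk ep j"
    proof
      fix j
      have "lk (lm (q ^ N * p ^ k)) j = lk (lm (r * q ^ k)) j" using r(2) by simp
      then show "lk (lm r) j + k * lk eq j = N * lk eq j + k * lk ep j"
        unfolding lhs(2) rhs lookup_add qN(2) pk(2) qk(2) by simp
    qed
    then show ?thesis using lm_cone[OF r(1) r0] by blast
  qed
  have le: "lk eq j \<le> lk ep j" for j
  proof (rule ccontr)
    assume "\<not> lk eq j \<le> lk ep j"
    then have lt: "Suc (lk ep j) \<le> lk eq j" by simp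
    define k where "k = N * lk eq j + 1"
    obtain e where e: "lk e j + k * lk eq j = N * lk eq j + k * lk ep j" using coord[of k] by blast
    have "k * Suc (lk ep j) \<le> k * lk eq j" using lt by (rule mult_le_mono2)
    then have "k \<le> N * lk eq j" using e by simp
    then show False unfolding k_def by simp
  qed
  define w where "w = ep - eq"
  have lw: "lk w j = lk ep j - lk eq j" for j unfolding w_def by (simp add: lookup_minus)
  have epc: "cone d a ep" unfolding ep_def by (rule lm_cone[OF pA p0])
  have eqc: "cone d a eq" unfolding eq_def by (rule lm_cone[OF qA q0])
  have w3: "w \<in> monoms_in 3" unfolding w_def using epc monoms_in_minus unfolding cone_def by blast
  have Lw: "0 \<le> Lf d a i w" if i: "1 \<le> i" "i \<le> d" for i
  proof (rule ccontr)
    assume neg: "\<not> 0 \<le> Lf d a i w"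
    have Leq: "0 \<le> Lf d a i eq" using eqc i unfolding cone_def by blast
    define k where "k = N * nat (Lf d a i eq) + 1"
    obtain e where e: "cone d a e" "\<forall>j. lk e j + k * lk eq j = N * lk eq j + k * lk ep j" using coord[of k] by blast
    have ej: "int (lk e j) = int N * int (lk eq j) + int k * int (lk w j)" for j
      using e(2) le[of j] unfolding lw by (simp add: of_nat_diff algebra_simps) (metis of_nat_add of_nat_mult)
    have "Lf d a i e = int N * Lf d a i eq + int k * Lf d a i w"
      unfolding Lf_def ej by (simp add: algebra_simps)
    moreover have "0 \<le> Lf d a i e" using e(1) i unfolding cone_def by blast
    moreover have "int k * Lf d a i w \<le> - int k"
    proof -
      have "Lf d a i w \<le> -1" using neg by simp
      then have "int k * Lf d a i w \<le> int k * (-1)" by (rule mult_left_mono) simp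
      then show ?thesis by simp
    qed
    moreover have "int k = int N * Lf d a i eq + 1" unfolding k_def using Leq by simp
    ultimately show False by linarith
  qed
  have "cone d a w" unfolding cone_def using w3 Lw by blast
  then show ?thesis using le unfolding w_def ep_def eq_def by blast
qed

lemma AI_sub:
  fixes p q m :: "'k::comm_ring_1 mpoly"
  assumes ai: "AI d a q N p" and mA: "m \<in> Aset d a"
  shows "AI d a q N (p - m * q)"
  unfolding AI_def
proof
  fix k
  have "\<forall>j\<in>UNIV. \<exists>r. r \<in> Aset d a \<and> q ^ N * p ^ j = r * q ^ j" using ai unfolding AI_def by blast
  then obtain R where R: "\<And>j. R j \<in> Aset d a" "\<And>j. q ^ N * p ^ j = R j * q ^ j" by (metis bchoice UNIV_I)
  have "q ^ N * (p - m * q) ^ k = q ^ N * (p + (- (m * q))) ^ k" by simp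
  also have "\<dots> = (\<Sum>j\<le>k. q ^ N * (of_nat (k choose j) * p ^ j * (- (m * q)) ^ (k - j)))"
    by (subst binomial_ring) (rule sum_distrib_left)
  also have "\<dots> = (\<Sum>j\<le>k. (of_nat (k choose j) * R j * (- m) ^ (k - j)) * q ^ k)"
  proof (rule sum.cong)
    fix j assume "j \<in> {..k}"
    then have jk: "q ^ j * q ^ (k - j) = q ^ k" by (simp flip: power_add)
    have pm: "(- (m * q)) ^ (k - j) = (- m) ^ (k - j) * q ^ (k - j)"
      by (metis minus_mult_left power_mult_distrib)
    have "q ^ N * (of_nat (k choose j) * p ^ j * (- (m * q)) ^ (k - j))
        = of_nat (k choose j) * (q ^ N * p ^ j) * ((- m) ^ (k - j) * q ^ (k - j))"
      unfolding pm by (simp add: mult_ac)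
    also have "\<dots> = of_nat (k choose j) * R j * (- m) ^ (k - j) * (q ^ j * q ^ (k - j))"
      unfolding R(2) by (simp add: mult_ac)
    finally show "q ^ N * (of_nat (k choose j) * p ^ j * (- (m * q)) ^ (k - j)) =
        (of_nat (k choose j) * R j * (- m) ^ (k - j)) * q ^ k" unfolding jk .
  qed simp
  also have "\<dots> = (\<Sum>j\<le>k. of_nat (k choose j) * R j * (- m) ^ (k - j)) * q ^ k"
    by (simp add: sum_distrib_right)
  finally have eq: "q ^ N * (p - m * q) ^ k = (\<Sum>j\<le>k. of_nat (k choose j) * R j * (- m) ^ (k - j)) * q ^ k" .
  have "(\<Sum>j\<le>k. of_nat (k choose j) * R j * (- m) ^ (k - j)) \<in> Aset d a"
    by (intro Aset_sum Aset_mult Aset_of_nat R(1) Aset_pow Aset_uminus mA)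
  then show "\<exists>r\<in>Aset d a. q ^ N * (p - m * q) ^ k = r * q ^ k" using eq by blast
qed

lemma div_step:
  fixes p q :: "'k::field mpoly"
  assumes pA: "p \<in> Aset d a" and qA: "q \<in> Aset d a" and p0: "p \<noteq> 0" and q0: "q \<noteq> 0"
    and ai: "AI d a q N p"
  shows "\<exists>m\<in>Aset d a. p - m * q \<in> Aset d a \<and> AI d a q N (p - m * q) \<and> (p - m * q = 0 \<or> lm (p - m * q) < lm p)"
proof -
  define w where "w = lm p - lm q"
  have ks: "\<forall>j. lk (lm q) j \<le> lk (lm p) j" and wc: "cone d a w"
    using key_step[OF pA qA p0 q0 ai] unfolding w_def by auto
  define c where "c = lc p / lc q"
  have c0: "c \<noteq> 0" unfolding c_def using lc_nz[OF p0] lc_nz[OF q0] by simp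
  define m where "m = sg w c"
  have mA: "m \<in> Aset d a" unfolding m_def by (rule Aset_single[OF wc])
  have m0: "m \<noteq> 0"
  proof
    assume "m = 0"
    then have "lk m w = 0" by simp
    then show False using c0 unfolding m_def by simp
  qed
  have wq: "w + lm q = lm p"
    by (rule poly_mapping_eqI) (simp add: w_def lookup_add lookup_minus ks)
  have lmq: "m * q \<noteq> 0 \<and> lm (m * q) = lm m + lm q \<and> lc (m * q) = lc m * lc q" by (rule lm_mult[OF m0 q0])
  have lmm: "lm m = w" "lc m = c" unfolding m_def using lm_sg[OF c0] by auto
  have mq: "lm (m * q) = lm p" "lc (m * q) = lc p"
  proof -
    show "lm (m * q) = lm p" using lmq lmm wq by simp
    have "lc (m * q) = c * lc q" using lmq lmm by simp
    also have "\<dots> = lc p" unfolding c_def using lc_nz[OF q0] by simp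
    finally show "lc (m * q) = lc p" .
  qed
  define p' where "p' = p - m * q"
  have p'A: "p' \<in> Aset d a" unfolding p'_def by (intro Aset_diff Aset_mult mA qA pA)
  have lk0: "lk p' (lm p) = 0"
    unfolding p'_def using mq by (simp add: lookup_minus lc_def)
  have "p' = 0 \<or> lm p' < lm p"
  proof (cases "p' = 0")
    case False
    have "lm p' \<in> ks p'" using lm_in[OF False] .
    moreover have "ks p' \<subseteq> ks p \<union> ks (m * q)" unfolding p'_def by (rule keys_diff)
    ultimately have "lm p' \<in> ks p \<union> ks (m * q)" by (rule subsetD[rotated])
    then have "lm p' \<le> lm p"
    proof
      assume "lm p' \<in> ks p" then show ?thesis by (rule lm_max)
    next
      assume "lm p' \<in> ks (m * q)" then have "lm p' \<le> lm (m * q)" by (rule lm_max)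
      then show ?thesis using mq by simp
    qed
    moreover have "lm p' \<noteq> lm p" using lk0 lm_in[OF False] by (auto simp: in_keys_iff)
    ultimately have "lm p' < lm p" by (simp add: order.not_eq_order_implies_strict)
    then show ?thesis by simp
  qed simp
  then show ?thesis using mA p'A AI_sub[OF ai mA] unfolding p'_def by blast
qed

lemma divide_A:
  fixes q :: "'k::field mpoly"
  assumes qA: "q \<in> Aset d a" and q0: "q \<noteq> 0"
  shows "p \<in> Aset d a \<Longrightarrow> AI d a q N p \<Longrightarrow> \<exists>r\<in>Aset d a. p = r * q"
proof (induction p rule: wf_induct[OF wf_inv_image[OF wf_lex3, of "\<lambda>p::'k mpoly. key3 (lm p)"]])
  case (1 p)
  show ?case
  proof (cases "p = 0")
    case True
    then show ?thesis using Aset_zero by force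
  next
    case False
    obtain m where m: "m \<in> Aset d a" "p - m * q \<in> Aset d a" "AI d a q N (p - m * q)"
      "p - m * q = 0 \<or> lm (p - m * q) < lm p"
      using div_step[OF "1.prems"(1) qA False q0 "1.prems"(2)] by blast
    show ?thesis
    proof (cases "p - m * q = 0")
      case True
      then show ?thesis using m(1) by (intro bexI[of _ m]) (simp_all add: algebra_simps)
    next
      case False2: False
      have lt: "lm (p - m * q) < lm p" using m(4) False2 by simp
      have "(key3 (lm (p - m * q)), key3 (lm p)) \<in> lex3"
        by (rule less_lex3[OF _ _ lt]) (use lm_cone[OF m(2) False2] lm_cone[OF "1.prems"(1) False] in \<open>auto simp: cone_def\<close>)
      then have "(p - m * q, p) \<in> inv_image lex3 (\<lambda>p. key3 (lm p))" by simp
      then obtain r' where r': "r' \<in> Aset d a" "p - m * q = r' * q" using "1.IH" m(2,3) by blast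
      have "p = (r' + m) * q" using r' by (simp add: algebra_simps)
      then show ?thesis using Aset_add[OF r'(1) m(1)] by blast
    qed
  qed
qed

lemma integral_AI:
  fixes p q :: "'k::comm_ring_1 mpoly"
  assumes pA: "p \<in> Aset d a" and qA: "q \<in> Aset d a" and n0: "0 < n0"
    and cA: "\<forall>i<n0. c i \<in> Aset d a"
    and eq: "p ^ n0 + (\<Sum>i<n0. c i * p ^ i * q ^ (n0 - i)) = 0"
  shows "AI d a q (n0 - 1) p"
  unfolding AI_def
proof
  fix k show "\<exists>r\<in>Aset d a. q ^ (n0 - 1) * p ^ k = r * q ^ k"
  proof (induction k rule: less_induct)
    case (less k)
    show ?case
    proof (cases "k < n0")
      case True
      have "q ^ (n0 - 1) * p ^ k = (q ^ (n0 - 1 - k) * p ^ k) * q ^ k"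
        using True by (simp add: mult_ac flip: power_add)
      moreover have "q ^ (n0 - 1 - k) * p ^ k \<in> Aset d a" by (intro Aset_mult Aset_pow pA qA)
      ultimately show ?thesis by blast
    next
      case False
      have "\<forall>j\<in>{..<k}. \<exists>r. r \<in> Aset d a \<and> q ^ (n0 - 1) * p ^ j = r * q ^ j" using less by blast
      then obtain R where R: "\<And>j. j < k \<Longrightarrow> R j \<in> Aset d a" "\<And>j. j < k \<Longrightarrow> q ^ (n0 - 1) * p ^ j = R j * q ^ j"
        by (metis bchoice lessThan_iff)
      have pn: "p ^ n0 = - (\<Sum>i<n0. c i * p ^ i * q ^ (n0 - i))" using eq by (simp add: eq_neg_iff_add_eq_0)
      have "q ^ (n0 - 1) * p ^ k = q ^ (n0 - 1) * (p ^ (k - n0) * p ^ n0)"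
        using False by (simp flip: power_add)
      also have "\<dots> = - (\<Sum>i<n0. c i * q ^ (n0 - i) * (q ^ (n0 - 1) * p ^ (k - n0 + i)))"
        unfolding pn by (simp add: sum_distrib_left mult_ac power_add)
      also have "\<dots> = - (\<Sum>i<n0. c i * R (k - n0 + i) * q ^ k)"
      proof -
        have "c i * q ^ (n0 - i) * (q ^ (n0 - 1) * p ^ (k - n0 + i)) = c i * R (k - n0 + i) * q ^ k"
          if i: "i < n0" for i
        proof -
          have "k - n0 + i < k" using i False by simp
          then have Rk: "q ^ (n0 - 1) * p ^ (k - n0 + i) = R (k - n0 + i) * q ^ (k - n0 + i)" by (rule R(2))
          have "c i * q ^ (n0 - i) * (q ^ (n0 - 1) * p ^ (k - n0 + i)) = c i * R (k - n0 + i) * (q ^ (n0 - i) * q ^ (k - n0 + i))"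
            unfolding Rk by (simp add: mult_ac)
          also have "q ^ (n0 - i) * q ^ (k - n0 + i) = q ^ k" using i False by (simp flip: power_add)
          finally show ?thesis .
        qed
        then show ?thesis by simp
      qed
      also have "\<dots> = (- (\<Sum>i<n0. c i * R (k - n0 + i))) * q ^ k"
        by (simp add: sum_distrib_right)
      finally have e: "q ^ (n0 - 1) * p ^ k = (- (\<Sum>i<n0. c i * R (k - n0 + i))) * q ^ k" .
      have "(- (\<Sum>i<n0. c i * R (k - n0 + i))) \<in> Aset d a"
        using cA R(1) False by (intro Aset_uminus Aset_sum Aset_mult) auto
      then show ?thesis using e by blast
    qed
  qed
qed

lemma Aset_normal:
  shows "normal_subring (Aset d a :: 'k::field mpoly set)"
  unfolding normal_subring_def
proof (intro ballI impI)
  fix p q :: "'k mpoly"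
  assume pA: "p \<in> Aset d a" and qA: "q \<in> Aset d a" and q0: "q \<noteq> 0"
  assume "\<exists>n>0. \<exists>c. (\<forall>i<n. c i \<in> Aset d a) \<and> p ^ n + (\<Sum>i<n. c i * p ^ i * q ^ (n - i)) = 0"
  then obtain n0 c where n0: "0 < n0" "\<forall>i<n0. c i \<in> Aset d a" "p ^ n0 + (\<Sum>i<n0. c i * p ^ i * q ^ (n0 - i)) = 0"
    by blast
  have "AI d a q (n0 - 1) p" by (rule integral_AI[OF pA qA n0])
  then show "\<exists>r\<in>Aset d a. p = r * q" using divide_A[OF qA q0 pA] by blast
qed

theorem proposition6p2:
  fixes d :: nat and a :: "nat \<Rightarrow> nat"
    and ord :: "monom \<Rightarrow> monom \<Rightarrow> bool"
  assumes a0: "a 0 = 0"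
    and a_incr: "\<And>i. 1 \<le> i \<Longrightarrow> i \<le> d \<Longrightarrow> a (i - 1) < a i"
    and b_mono: "\<And>i. 1 \<le> i \<Longrightarrow> i + 1 \<le> d \<Longrightarrow> diff_seq a i \<le> diff_seq a (i + 1)"
    and ord: "term_order (d + 3) ord"
    and init_lin: "\<And>i. 1 \<le> i \<Longrightarrow> i \<le> d \<Longrightarrow>
        lead_monom ord (gb_linear a i :: 'k::{alg_closed_field, field_char_0} mpoly) =
        lead_monom ord (Var 0 * Tv i :: 'k mpoly)"
    and init_quad: "\<And>i j. j < i \<Longrightarrow> i \<le> d \<Longrightarrow> 1 \<le> j \<Longrightarrow>
        lead_monom ord (gb_quad a i j :: 'k mpoly) = lead_monom ord (Tv i * Tv (j - 1) :: 'k mpoly)"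
  shows "groebner_basis (d + 3) ord (gb_set d a :: 'k mpoly set) (rees_kernel d a)
         \<and> normal_subring (rees_algebra d a :: 'k mpoly set)"
proof
  show "groebner_basis (d + 3) ord (gb_set d a :: 'k mpoly set) (rees_kernel d a)"
    by (rule groebner_part[OF a0 a_incr b_mono ord init_lin init_quad])
  have "(rees_algebra d a :: 'k mpoly set) = Aset d a"
    by (rule rees_eq[OF a0 a_incr b_mono])
  then show "normal_subring (rees_algebra d a :: 'k mpoly set)"
    using Aset_normal by simp
qed

end
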